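(* Let $F$ be a Ferrers diagram of semiperimeter $n+1$ and let $D=(T,(a_1,\ldots,a_n))\in\mathsf{DecEWtab}(F)$ be a decorated EW-tableau. Then $D\in\mathsf{Rec}_{\mathsf{EW}}(F)$ if and only if $a_j<\nu_j(T)$ for all $j\in[1,n]$.
   Context: Ferrers diagrams and graphs: a Ferrers diagram $F$ (English convention) of semiperimeter $n+1$ has rows and columns labeled by $0,\ldots,n$: the $n+1$ unit steps of its south-east boundary path, traversed from top-right to bottom-left, are labeled $0,\ldots,n$; a vertical step labels the row it bounds, a horizontal step the column it bounds (top row labeled $0$). $\mathsf{rows}(F)$, $\mathsf{cols}(F)$ are the label sets; $F$ has a cell in row $i$, column $j$ iff $i<j$. $G(F)$ has vertex set $\{0,\ldots,n\}$ with edges $\{i,j\}$ for $i\in\mathsf{rows}(F)$, $j\in\mathsf{cols}(F)$, $i<j$. Sandpile model on $G(F)$ with sink $0$: configurations $c\in\mathbb{N}^n$; non-sink $v$ unstable if $c_v\ge\deg(v)$; toppling sends one grain to each neighbour (grains to $0$ disappear); toppling the sink adds one grain to each neighbour of $0$. Recurrent: stable configurations obtainable from $c_v=\deg(v)-1$ by adding grains and stabilizing; $\mathsf{Rec}(G)$ their set; $\mathsf{Rec}^{\mathsf{min}}(G)$: recurrent configurations of minimal total grain count. Canonical toppling of a recurrent $c$: topple the sink ($U^{(0)}_c=\{0\}$), then alternately topple simultaneously all unstable vertices in $\mathsf{cols}(F)$ ($V^{(1)}_c$), all unstable in $\mathsf{rows}(F)$ ($U^{(1)}_c$), etc.; $\mathsf{CanonTop}(c)=(U^{(0)}_c,V^{(1)}_c,U^{(1)}_c,\ldots)$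 is an ordered partition of $\{0,\ldots,n\}$. For $c\in\mathsf{Rec}(G(F))$, $\mathsf{minrec}(c)$ is the configuration $m$ with $m_j=|\{\ell\in V^{(k)}_c: j<\ell,\ k>i\}|$ if $j\in U^{(i)}_c$ and $m_j=|\{\ell\in U^{(k)}_c: j>\ell,\ k\ge i\}|$ if $j\in V^{(i)}_c$; it is a minimal recurrent configuration. EW-tableaux: $0/1$-fillings $T$ of $F$ ($T_{ij}$ = entry in row $i$, column $j$) with top row all 1s, a 0 in every other row, and no rectangle with 0s in two diagonally opposite corners and 1s in the other two; $\mathsf{EWtab}(F)$ is their set. $\phi_{TC}(T)$ is the configuration with $c_i$ = number of 1s in row $i$ ($i\in\mathsf{rows}(F)$), $c_i$ = number of 0s in column $i$ ($i\in\mathsf{cols}(F)$); $\phi_{TC}$ is a bijection $\mathsf{EWtab}(F)\to\mathsf{Rec}^{\mathsf{min}}(G(F))$ with inverse denoted $\phi_{CT}$. $\mathsf{CanonTop}(T):=\mathsf{CanonTop}(\phi_{TC}(T))$. Decorated EW-tableaux: $\mathsf{DecEWtab}(F)$ is the set of pairs $(T,(x_1,\ldots,x_n))$ with $T\in\mathsf{EWtab}(F)$, $0\le x_i<$ (number of 0s in row $i$ of $T$) for $i\in\mathsf{rows}(F)$, and $0\le x_i<$ (number of 1s in column $i$ of $T$) for $i\in\mathsf{cols}(F)$. Define $\psi:\mathsf{Rec}(G(F))\to\mathsf{DecEWtab}(F)$ by $\psi(x)=(\phi_{CT}(\mathsf{minrec}(x)),(x_1-\mathsf{minrec}(x)_1,\ldots,x_n-\mathsf{minrec}(x)_n))$,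 and $\mathsf{Rec}_{\mathsf{EW}}(F)=\psi(\mathsf{Rec}(G(F)))$. Supplementary tableau $S=S(T)$: the $|\mathsf{rows}(F)|\times|\mathsf{cols}(F)|$ array with $S_{ij}=1$ if row label $i$ lies in an earlier block of $\mathsf{CanonTop}(T)$ than column label $j$, else $0$. An entry $x$ of $T$ at $(j,k)$ is a cornersupport entry iff there exist a row $j'\ne j$ and column $k'\ne k$ with $S_{j'k'}\ne x$ and $S_{j'k}=S_{jk'}=x$. For $j\in[1,n]$, $\nu_j(T)$ is the number of non-cornersupport 0s in row $j$ of $T$ if $j\in\mathsf{rows}(F)$, and the number of non-cornersupport 1s in column $j$ of $T$ if $j\in\mathsf{cols}(F)$. *)

theory Defs
  imports Main
begin

(* A Ferrers diagram of semiperimeter n+1 is encoded by n and the set R = rows(F)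
   of labels of vertical boundary steps; cols(F) = {0..n} - R.
   Top row is labelled 0, and the last (bottom-left) step is horizontal. *)
definition ferrers :: "nat \<Rightarrow> nat set \<Rightarrow> bool" where
  "ferrers n R \<longleftrightarrow> 1 \<le> n \<and> R \<subseteq> {0..n} \<and> 0 \<in> R \<and> n \<notin> R"

definition cols :: "nat \<Rightarrow> nat set \<Rightarrow> nat set" where
  "cols n R = {0..n} - R"

definition cell :: "nat \<Rightarrow> nat set \<Rightarrow> nat \<Rightarrow> nat \<Rightarrow> bool" where
  "cell n R i j \<longleftrightarrow> i \<in> R \<and> j \<in> cols n R \<and> i < j"

definition adj :: "nat \<Rightarrow> nat set \<Rightarrow> nat \<Rightarrow> nat \<Rightarrow> bool" where
  "adj n R u v \<longleftrightarrow> cell n R u v \<or> cell n R v u"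

definition deg :: "nat \<Rightarrow> nat set \<Rightarrow> nat \<Rightarrow> nat" where
  "deg n R v = card {u \<in> {0..n}. adj n R v u}"

(* configurations: functions nat => nat, meaningful on {1..n}, zero elsewhere *)
definition stable :: "nat \<Rightarrow> nat set \<Rightarrow> (nat \<Rightarrow> nat) \<Rightarrow> bool" where
  "stable n R c \<longleftrightarrow> (\<forall>v\<in>{1..n}. c v < deg n R v)"

definition topple :: "nat \<Rightarrow> nat set \<Rightarrow> nat \<Rightarrow> (nat \<Rightarrow> nat) \<Rightarrow> (nat \<Rightarrow> nat)" where
  "topple n R v c = (\<lambda>u. if u = v then c u - deg n R v
                          else if u \<in> {1..n} \<and> adj n R v u then c u + 1 else c u)"

definition topple_step :: "nat \<Rightarrow> nat set \<Rightarrow> (nat \<Rightarrow> nat) \<Rightarrow> (nat \<Rightarrow> nat) \<Rightarrow> bool" where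
  "topple_step n R c c' \<longleftrightarrow> (\<exists>v\<in>{1..n}. deg n R v \<le> c v \<and> c' = topple n R v c)"

definition cmax :: "nat \<Rightarrow> nat set \<Rightarrow> nat \<Rightarrow> nat" where
  "cmax n R v = (if v \<in> {1..n} then deg n R v - 1 else 0)"

definition recurrent :: "nat \<Rightarrow> nat set \<Rightarrow> (nat \<Rightarrow> nat) \<Rightarrow> bool" where
  "recurrent n R c \<longleftrightarrow> stable n R c \<and>
     (\<exists>d. (\<forall>u. u \<notin> {1..n} \<longrightarrow> d u = 0) \<and>
          (topple_step n R)\<^sup>*\<^sup>* (\<lambda>u. cmax n R u + d u) c)"

definition Rec :: "nat \<Rightarrow> nat set \<Rightarrow> (nat \<Rightarrow> nat) set" where
  "Rec n R = {c. recurrent n R c}"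

definition Rec_min :: "nat \<Rightarrow> nat set \<Rightarrow> (nat \<Rightarrow> nat) set" where
  "Rec_min n R = {c \<in> Rec n R. \<forall>c' \<in> Rec n R. (\<Sum>v=1..n. c v) \<le> (\<Sum>v=1..n. c' v)}"

(* canonical toppling: step k yields (block_k, configuration after toppling blocks 0..k),
   block 0 = {0} (sink); odd blocks: unstable columns, even blocks >= 2: unstable rows *)
primrec canon_step :: "nat \<Rightarrow> nat set \<Rightarrow> (nat \<Rightarrow> nat) \<Rightarrow> nat \<Rightarrow> nat set \<times> (nat \<Rightarrow> int)" where
  "canon_step n R c 0 =
     ({0}, \<lambda>u. if u \<in> {1..n} then int (c u) + (if adj n R 0 u then 1 else 0) else 0)"
| "canon_step n R c (Suc k) =
     (let x = snd (canon_step n R c k);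
          B = {u \<in> {1..n}. u \<in> (if odd (Suc k) then cols n R else R) \<and> int (deg n R u) \<le> x u}
      in (B, \<lambda>u. if u \<in> {1..n}
                   then x u + int (card {v \<in> B. adj n R v u}) - (if u \<in> B then int (deg n R u) else 0)
                   else 0))"

(* the k-th block of CanonTop(c) = (U^(0), V^(1), U^(1), V^(2), ...) *)
definition canon_block :: "nat \<Rightarrow> nat set \<Rightarrow> (nat \<Rightarrow> nat) \<Rightarrow> nat \<Rightarrow> nat set" where
  "canon_block n R c k = fst (canon_step n R c k)"

definition canonU :: "nat \<Rightarrow> nat set \<Rightarrow> (nat \<Rightarrow> nat) \<Rightarrow> nat \<Rightarrow> nat set" where
  "canonU n R c i = canon_block n R c (2 * i)"

definition canonV :: "nat \<Rightarrow> nat set \<Rightarrow> (nat \<Rightarrow> nat) \<Rightarrow> nat \<Rightarrow> nat set" where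
  "canonV n R c i = (if i = 0 then {} else canon_block n R c (2 * i - 1))"

definition canon_index :: "nat \<Rightarrow> nat set \<Rightarrow> (nat \<Rightarrow> nat) \<Rightarrow> nat \<Rightarrow> nat" where
  "canon_index n R c v = (LEAST k. v \<in> canon_block n R c k)"

definition minrec :: "nat \<Rightarrow> nat set \<Rightarrow> (nat \<Rightarrow> nat) \<Rightarrow> (nat \<Rightarrow> nat)" where
  "minrec n R c = (\<lambda>j. if j \<in> {1..n} then
      (if (\<exists>i. j \<in> canonU n R c i)
       then card {l. \<exists>i k. j \<in> canonU n R c i \<and> i < k \<and> l \<in> canonV n R c k \<and> j < l}
       else card {l. \<exists>i k. j \<in> canonV n R c i \<and> i \<le> k \<and> l \<in> canonU n R c k \<and> l < j})
    else 0)"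

(* tableaux: T i j = True means entry 1 in row i, column j; False outside F *)
type_synonym tableau = "nat \<Rightarrow> nat \<Rightarrow> bool"

definition EWtab :: "nat \<Rightarrow> nat set \<Rightarrow> tableau set" where
  "EWtab n R = {T.
     (\<forall>i j. T i j \<longrightarrow> cell n R i j) \<and>
     (\<forall>j. cell n R 0 j \<longrightarrow> T 0 j) \<and>
     (\<forall>i\<in>R - {0}. \<exists>j. cell n R i j \<and> \<not> T i j) \<and>
     (\<forall>i i' j j'. i < i' \<longrightarrow> j < j' \<longrightarrow>
        cell n R i j \<longrightarrow> cell n R i j' \<longrightarrow> cell n R i' j \<longrightarrow> cell n R i' j' \<longrightarrow>
        \<not> ((\<not> T i j \<and> \<not> T i' j' \<and> T i j' \<and> T i' j) \<or>
           (T i j \<and> T i' j' \<and> \<not> T i j' \<and> \<not> T i' j)))}"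

definition row_ones :: "nat \<Rightarrow> nat set \<Rightarrow> tableau \<Rightarrow> nat \<Rightarrow> nat" where
  "row_ones n R T i = card {j. cell n R i j \<and> T i j}"
definition row_zeros :: "nat \<Rightarrow> nat set \<Rightarrow> tableau \<Rightarrow> nat \<Rightarrow> nat" where
  "row_zeros n R T i = card {j. cell n R i j \<and> \<not> T i j}"
definition col_ones :: "nat \<Rightarrow> nat set \<Rightarrow> tableau \<Rightarrow> nat \<Rightarrow> nat" where
  "col_ones n R T j = card {i. cell n R i j \<and> T i j}"
definition col_zeros :: "nat \<Rightarrow> nat set \<Rightarrow> tableau \<Rightarrow> nat \<Rightarrow> nat" where
  "col_zeros n R T j = card {i. cell n R i j \<and> \<not> T i j}"

definition phi_TC :: "nat \<Rightarrow> nat set \<Rightarrow> tableau \<Rightarrow> (nat \<Rightarrow> nat)" where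
  "phi_TC n R T = (\<lambda>i. if i \<in> {1..n} then
       (if i \<in> R then row_ones n R T i else col_zeros n R T i) else 0)"

definition phi_CT :: "nat \<Rightarrow> nat set \<Rightarrow> (nat \<Rightarrow> nat) \<Rightarrow> tableau" where
  "phi_CT n R c = (THE T. T \<in> EWtab n R \<and> phi_TC n R T = c)"

definition DecEWtab :: "nat \<Rightarrow> nat set \<Rightarrow> (tableau \<times> (nat \<Rightarrow> nat)) set" where
  "DecEWtab n R = {(T, x). T \<in> EWtab n R \<and>
      (\<forall>i. i \<notin> {1..n} \<longrightarrow> x i = 0) \<and>
      (\<forall>i\<in>{1..n}. (i \<in> R \<longrightarrow> x i < row_zeros n R T i) \<and>
                  (i \<notin> R \<longrightarrow> x i < col_ones n R T i))}"

definition psi :: "nat \<Rightarrow> nat set \<Rightarrow> (nat \<Rightarrow> nat) \<Rightarrow> tableau \<times> (nat \<Rightarrow> nat)" where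
  "psi n R x = (phi_CT n R (minrec n R x),
                \<lambda>i. if i \<in> {1..n} then x i - minrec n R x i else 0)"

definition Rec_EW :: "nat \<Rightarrow> nat set \<Rightarrow> (tableau \<times> (nat \<Rightarrow> nat)) set" where
  "Rec_EW n R = psi n R ` Rec n R"

definition supp :: "nat \<Rightarrow> nat set \<Rightarrow> tableau \<Rightarrow> nat \<Rightarrow> nat \<Rightarrow> bool" where
  "supp n R T i j \<longleftrightarrow>
     canon_index n R (phi_TC n R T) i < canon_index n R (phi_TC n R T) j"

definition cornersupport :: "nat \<Rightarrow> nat set \<Rightarrow> tableau \<Rightarrow> nat \<Rightarrow> nat \<Rightarrow> bool" where
  "cornersupport n R T j k \<longleftrightarrow>
     (\<exists>j'\<in>R. \<exists>k'\<in>cols n R. j' \<noteq> j \<and> k' \<noteq> k \<and>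
        supp n R T j' k' \<noteq> T j k \<and> supp n R T j' k = T j k \<and> supp n R T j k' = T j k)"

definition nu :: "nat \<Rightarrow> nat set \<Rightarrow> tableau \<Rightarrow> nat \<Rightarrow> nat" where
  "nu n R T j = (if j \<in> R
     then card {k. cell n R j k \<and> \<not> T j k \<and> \<not> cornersupport n R T j k}
     else card {i. cell n R i j \<and> T i j \<and> \<not> cornersupport n R T i j})"

end

theory Submission
  imports Defs
begin

lemma card_split:
  assumes "finite A"
  shows "card A = card {x\<in>A. P x} + card {x\<in>A. \<not> P x}"
proof -
  have "A = {x\<in>A. P x} \<union> {x\<in>A. \<not> P x}" by blast
  moreover have "{x\<in>A. P x} \<inter> {x\<in>A. \<not> P x} = {}" by blast
  ultimately show ?thesis using assms
    by (metis (no_types, lifting) card_Un_disjoint finite_Un)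
qed

locale fer =
  fixes n :: nat and R :: "nat set"
  assumes fer: "ferrers n R"
begin

lemma R0: "0 \<in> R" and Rsub: "R \<subseteq> {0..n}" and nR: "n \<notin> R" and n1: "1 \<le> n"
  using fer by (auto simp: ferrers_def)

lemma cols_iff: "v \<in> cols n R \<longleftrightarrow> v \<le> n \<and> v \<notin> R"
  by (auto simp: cols_def)

lemma cell_iff: "cell n R i j \<longleftrightarrow> i \<in> R \<and> j \<le> n \<and> j \<notin> R \<and> i < j"
  by (auto simp: cell_def cols_def)

lemma adj_sym: "adj n R u v = adj n R v u"
  by (auto simp: adj_def)

lemma adj_range: "adj n R u v \<Longrightarrow> u \<le> n \<and> v \<le> n \<and> u \<noteq> v \<and> (u \<in> R \<longleftrightarrow> v \<notin> R)"
  using Rsub by (auto simp: adj_def cell_iff)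

lemma adj_0: "adj n R 0 v \<longleftrightarrow> v \<in> {1..n} \<and> v \<notin> R"
  using R0 by (auto simp: adj_def cell_iff)

lemma adj_row: "u \<in> R \<Longrightarrow> adj n R u v \<longleftrightarrow> cell n R u v"
  by (auto simp: adj_def cell_iff)

lemma adj_col: "u \<notin> R \<Longrightarrow> adj n R u v \<longleftrightarrow> cell n R v u"
  by (auto simp: adj_def cell_iff)

definition nb :: "nat \<Rightarrow> nat set" where
  "nb v = {u\<in>{0..n}. adj n R v u}"

lemma finite_nb[simp]: "finite (nb v)" by (simp add: nb_def)

lemma deg_nb: "deg n R v = card (nb v)" by (simp add: deg_def nb_def)

lemma deg_le_n: "v \<le> n \<Longrightarrow> deg n R v \<le> n"
proof -
  assume "v \<le> n"
  have "nb v \<subseteq> {0..n} - {v}" using adj_range by (auto simp: nb_def)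
  hence "card (nb v) \<le> card ({0..n} - {v})" by (intro card_mono) auto
  also have "\<dots> = n" using \<open>v \<le> n\<close> by simp
  finally show ?thesis by (simp add: deg_nb)
qed

lemma adj_n: "v \<in> R \<Longrightarrow> v \<noteq> n \<Longrightarrow> v \<le> n \<Longrightarrow> adj n R v n"
  using nR by (auto simp: adj_def cell_iff)

end


context fer begin

definition blk :: "(nat \<Rightarrow> nat) \<Rightarrow> nat \<Rightarrow> nat set" where
  "blk c k = canon_block n R c k"
definition X :: "(nat \<Rightarrow> nat) \<Rightarrow> nat \<Rightarrow> nat \<Rightarrow> int" where
  "X c k = snd (canon_step n R c k)"
definition Top :: "(nat \<Rightarrow> nat) \<Rightarrow> nat \<Rightarrow> nat set" where
  "Top c k = {v. \<exists>i\<le>k. v \<in> blk c i}"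
definition TopI :: "(nat \<Rightarrow> nat) \<Rightarrow> nat set" where
  "TopI c = {v. \<exists>k. v \<in> blk c k}"

lemma blk_0: "blk c 0 = {0}" by (simp add: blk_def canon_block_def)
lemma X_0: "X c 0 u = (if u\<in>{1..n} then int (c u) + (if adj n R 0 u then 1 else 0) else 0)"
  by (simp add: X_def)
lemma blk_Suc: "blk c (Suc k) = {u\<in>{1..n}. u \<in> (if odd (Suc k) then cols n R else R) \<and> int (deg n R u) \<le> X c k u}"
  by (simp add: blk_def canon_block_def X_def Let_def)
lemma X_Suc: "X c (Suc k) u = (if u\<in>{1..n} then X c k u + int (card {v\<in>blk c (Suc k). adj n R v u}) - (if u \<in> blk c (Suc k) then int (deg n R u) else 0) else 0)"
  by (simp add: blk_def canon_block_def X_def Let_def)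

lemma blk_Suc_type: "u \<in> blk c (Suc k) \<Longrightarrow> u \<in> {1..n} \<and> (u \<in> R \<longleftrightarrow> even (Suc k))"
  unfolding blk_Suc by (auto simp: cols_iff split: if_splits)

lemma blk_sub: "blk c k \<subseteq> {0..n}"
  by (cases k) (auto simp: blk_0 dest: blk_Suc_type)

lemma Top_sub: "Top c k \<subseteq> {0..n}" using blk_sub by (auto simp: Top_def)
lemma TopI_sub: "TopI c \<subseteq> {0..n}" using blk_sub by (auto simp: TopI_def)
lemma finite_Top[simp]: "finite (Top c k)" using Top_sub finite_subset by blast
lemma finite_TopI[simp]: "finite (TopI c)" using TopI_sub finite_subset by blast
lemma Top_0: "Top c 0 = {0}" by (auto simp: Top_def blk_0)
lemma Top_Suc: "Top c (Suc k) = Top c k \<union> blk c (Suc k)"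
  by (auto simp: Top_def le_Suc_eq)
lemma Top_mono: "i \<le> j \<Longrightarrow> Top c i \<subseteq> Top c j" unfolding Top_def using le_trans by blast
lemma Top_TopI: "Top c k \<subseteq> TopI c" by (auto simp: Top_def TopI_def)
lemma zero_TopI: "0 \<in> TopI c" using blk_0 by (auto simp: TopI_def)

lemma card_adj_le_deg: "S \<subseteq> {0..n} \<Longrightarrow> card {w\<in>S. adj n R u w} \<le> deg n R u"
  unfolding deg_nb nb_def by (rule card_mono) auto

definition inv :: "(nat \<Rightarrow> nat) \<Rightarrow> nat \<Rightarrow> bool" where
  "inv c k \<longleftrightarrow> (\<forall>i\<le>k. \<forall>j\<le>k. \<forall>v. v \<in> blk c i \<longrightarrow> v \<in> blk c j \<longrightarrow> i = j) \<and>
     (\<forall>u\<in>{1..n}. X c k u = int (c u) + int (card {w\<in>Top c k. adj n R u w})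
        - (if u \<in> Top c k then int (deg n R u) else 0))"

lemma inv_all:
  assumes st: "stable n R c"
  shows "inv c k"
proof (induction k)
  case 0
  show ?case unfolding inv_def
  proof (intro conjI ballI allI impI)
    fix u assume u: "u \<in> {1..n}"
    have "{w\<in>Top c 0. adj n R u w} = (if adj n R 0 u then {0} else {})"
      using adj_sym by (auto simp: Top_0)
    thus "X c 0 u = int (c u) + int (card {w\<in>Top c 0. adj n R u w}) - (if u \<in> Top c 0 then int (deg n R u) else 0)"
      using u by (simp add: X_0 Top_0)
  qed auto
next
  case (Suc k)
  define B where "B = blk c (Suc k)"
  have IH1: "\<And>i j v. i \<le> k \<Longrightarrow> j \<le> k \<Longrightarrow> v \<in> blk c i \<Longrightarrow> v \<in> blk c j \<Longrightarrow> i = j"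
    using Suc unfolding inv_def by blast
  have IH2: "\<And>u. u \<in> {1..n} \<Longrightarrow> X c k u = int (c u) + int (card {w\<in>Top c k. adj n R u w})
        - (if u \<in> Top c k then int (deg n R u) else 0)"
    using Suc unfolding inv_def by blast
  have disj: "B \<inter> Top c k = {}"
  proof (rule ccontr)
    assume "B \<inter> Top c k \<noteq> {}"
    then obtain v where vB: "v \<in> B" and vT: "v \<in> Top c k" by blast
    have v1: "v \<in> {1..n}" and le: "int (deg n R v) \<le> X c k v"
      using vB unfolding B_def blk_Suc by auto
    have "card {w\<in>Top c k. adj n R v w} \<le> deg n R v" using Top_sub card_adj_le_deg by blast
    moreover have "c v < deg n R v" using st v1 by (simp add: stable_def)
    ultimately show False using le IH2[OF v1] vT by simp
  qed
  show ?case unfolding inv_def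
  proof (intro conjI ballI allI impI)
    fix i j v assume ij: "i \<le> Suc k" "j \<le> Suc k" and vi: "v \<in> blk c i" and vj: "v \<in> blk c j"
    show "i = j"
    proof (cases "i = Suc k"; cases "j = Suc k")
      assume a: "i = Suc k" "j \<noteq> Suc k"
      hence "j \<le> k" using ij by simp
      hence "v \<in> B \<inter> Top c k" using vi vj a unfolding B_def Top_def by blast
      thus ?thesis using disj by blast
    next
      assume a: "i \<noteq> Suc k" "j = Suc k"
      hence "i \<le> k" using ij by simp
      hence "v \<in> B \<inter> Top c k" using vi vj a unfolding B_def Top_def by blast
      thus ?thesis using disj by blast
    next
      assume "i \<noteq> Suc k" "j \<noteq> Suc k"
      thus ?thesis using IH1[of i j v] ij vi vj by simp
    qed simp
  next
    fix u assume u: "u \<in> {1..n}"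
    have TS: "Top c (Suc k) = Top c k \<union> B" by (simp add: Top_Suc B_def)
    have fB: "finite B" using blk_sub finite_subset unfolding B_def by blast
    have "{w\<in>Top c (Suc k). adj n R u w} = {w\<in>Top c k. adj n R u w} \<union> {w\<in>B. adj n R u w}"
      using TS by auto
    moreover have "card ({w\<in>Top c k. adj n R u w} \<union> {w\<in>B. adj n R u w}) = card {w\<in>Top c k. adj n R u w} + card {w\<in>B. adj n R u w}"
      using disj fB by (intro card_Un_disjoint) auto
    ultimately have cardU: "card {w\<in>Top c (Suc k). adj n R u w} = card {w\<in>Top c k. adj n R u w} + card {w\<in>B. adj n R u w}"
      by simp
    have cB: "{w\<in>B. adj n R u w} = {v\<in>B. adj n R v u}" using adj_sym by auto
    have "X c (Suc k) u = X c k u + int (card {v\<in>B. adj n R v u}) - (if u \<in> B then int (deg n R u) else 0)"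
      using u by (simp add: X_Suc B_def)
    thus "X c (Suc k) u = int (c u) + int (card {w\<in>Top c (Suc k). adj n R u w})
        - (if u \<in> Top c (Suc k) then int (deg n R u) else 0)"
    proof -
      have e: "X c (Suc k) u = int (c u) + int (card {w\<in>Top c k. adj n R u w})
        - (if u \<in> Top c k then int (deg n R u) else 0) + int (card {w\<in>B. adj n R u w}) - (if u \<in> B then int (deg n R u) else 0)"
        using IH2[OF u] cB \<open>X c (Suc k) u = _\<close> by simp
      show ?thesis
      proof (cases "u \<in> B")
        case True
        hence "u \<notin> Top c k" using disj by blast
        thus ?thesis using e True cardU TS by simp
      next
        case False
        thus ?thesis using e cardU TS by simp
      qed
    qed
  qed
qed

lemma blk_unique:
  assumes "stable n R c" "v \<in> blk c i" "v \<in> blk c j"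
  shows "i = j"
proof -
  have "\<forall>i'\<le>max i j. \<forall>j'\<le>max i j. \<forall>v. v \<in> blk c i' \<longrightarrow> v \<in> blk c j' \<longrightarrow> i' = j'"
    using inv_all[OF assms(1), of "max i j"] unfolding inv_def by blast
  thus ?thesis using assms(2,3) by simp
qed

lemma X_formula:
  assumes "stable n R c" "u \<in> {1..n}"
  shows "X c k u = int (c u) + int (card {w\<in>Top c k. adj n R u w})
        - (if u \<in> Top c k then int (deg n R u) else 0)"
  using inv_all[OF assms(1), of k] assms(2) unfolding inv_def by blast

lemma finite_choose_bound:
  fixes P :: "'a \<Rightarrow> nat \<Rightarrow> bool"
  assumes "finite S" "\<forall>v\<in>S. \<exists>k. P v k"
  shows "\<exists>K. \<forall>v\<in>S. \<exists>k\<le>K. P v k"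
  using assms
proof (induction S rule: finite_induct)
  case empty thus ?case by simp
next
  case (insert x F)
  then obtain K where K: "\<forall>v\<in>F. \<exists>k\<le>K. P v k" by auto
  obtain kx where "P x kx" using insert by auto
  have "\<forall>v\<in>insert x F. \<exists>k\<le>max K kx. P v k"
  proof
    fix v assume "v \<in> insert x F"
    then consider "v = x" | "v \<in> F" by blast
    thus "\<exists>k\<le>max K kx. P v k"
    proof cases
      case 1 thus ?thesis using \<open>P x kx\<close> by (intro exI[of _ kx]) simp
    next
      case 2 then obtain k where "k \<le> K" "P v k" using K by blast
      thus ?thesis by (intro exI[of _ k]) simp
    qed
  qed
  thus ?case by blast
qed

lemma TopI_eq_Top: "\<exists>K. TopI c = Top c K"
proof -
  have "\<forall>v\<in>TopI c. \<exists>k. v \<in> blk c k" by (auto simp: TopI_def)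
  then obtain K where K: "\<forall>v\<in>TopI c. \<exists>k\<le>K. v \<in> blk c k"
    using finite_choose_bound[OF finite_TopI, of c "\<lambda>v k. v \<in> blk c k"] by blast
  have "TopI c \<subseteq> Top c K" using K by (auto simp: Top_def)
  thus ?thesis using Top_TopI by blast
qed

lemma limit:
  assumes st: "stable n R c" and v: "v \<in> {1..n}" "v \<notin> TopI c"
  shows "c v + card {w\<in>TopI c. adj n R v w} < deg n R v"
proof -
  obtain K where K: "TopI c = Top c K" using TopI_eq_Top by blast
  define k where "k = (if (v \<in> R) = even (Suc K) then K else Suc K)"
  have kK: "K \<le> k" and ty: "(v \<in> R) = even (Suc k)" by (auto simp: k_def)
  have Tk: "Top c k = TopI c" using Top_mono[OF kK, of c] Top_TopI[of c k] K by blast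
  have "v \<notin> blk c (Suc k)" using v(2) by (auto simp: TopI_def)
  hence "\<not> int (deg n R v) \<le> X c k v" using v(1) ty unfolding blk_Suc by (auto simp: cols_iff)
  moreover have "X c k v = int (c v) + int (card {w\<in>TopI c. adj n R v w})"
    using X_formula[OF st v(1), of k] Tk v(2) by simp
  ultimately show ?thesis by simp
qed

end


context fer begin

definition noFSC :: "(nat \<Rightarrow> nat) \<Rightarrow> bool" where
  "noFSC c \<longleftrightarrow> (\<forall>S. S \<subseteq> {1..n} \<longrightarrow> S \<noteq> {} \<longrightarrow> (\<exists>v\<in>S. card {w\<in>S. adj n R v w} \<le> c v))"

lemma noFSC_cmax:
  assumes "\<forall>v\<in>{1..n}. cmax n R v \<le> c v"
  shows "noFSC c"
  unfolding noFSC_def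
proof (intro allI impI)
  fix S assume S: "S \<subseteq> {1..n}" "S \<noteq> {}"
  have fS: "finite S" using S(1) finite_subset by blast
  define v where "v = Max S"
  have vS: "v \<in> S" using fS S(2) by (simp add: v_def)
  have vmax: "\<And>w. w \<in> S \<Longrightarrow> w \<le> v" using fS by (simp add: v_def)
  have v1: "v \<in> {1..n}" using vS S(1) by blast
  obtain w where w: "w \<in> nb v" "w \<notin> S"
  proof (cases "v \<in> R")
    case True
    have "v \<noteq> n" using True nR by blast
    hence "adj n R v n" using adj_n True v1 by simp
    moreover have "n \<notin> S"
    proof
      assume "n \<in> S" hence "n \<le> v" by (rule vmax)
      thus False using \<open>v \<noteq> n\<close> v1 by simp
    qed
    ultimately show ?thesis using that by (auto simp: nb_def)
  next
    case False
    hence "adj n R v 0" using adj_0 adj_sym v1 by auto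
    moreover have "0 \<notin> S" using S(1) by auto
    ultimately show ?thesis using that by (auto simp: nb_def)
  qed
  have "{u\<in>S. adj n R v u} \<subset> nb v" using w S(1) by (auto simp: nb_def)
  hence "card {u\<in>S. adj n R v u} < deg n R v" unfolding deg_nb by (intro psubset_card_mono) auto
  hence "card {u\<in>S. adj n R v u} \<le> cmax n R v" using v1 by (simp add: cmax_def)
  moreover have "cmax n R v \<le> c v" using assms v1 by blast
  ultimately have "card {u\<in>S. adj n R v u} \<le> c v" by linarith
  thus "\<exists>v\<in>S. card {w\<in>S. adj n R v w} \<le> c v" using vS by blast
qed

lemma noFSC_step:
  assumes nf: "noFSC c" and st: "topple_step n R c c'"
  shows "noFSC c'"
  unfolding noFSC_def
proof (intro allI impI, rule ccontr)
  fix S assume S: "S \<subseteq> {1..n}" "S \<noteq> {}" and ne: "\<not> (\<exists>v\<in>S. card {w\<in>S. adj n R v w} \<le> c' v)"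
  obtain v0 where v0: "v0 \<in> {1..n}" "deg n R v0 \<le> c v0" and c': "c' = topple n R v0 c"
    using st unfolding topple_step_def by blast
  have fS: "finite S" using S(1) finite_subset by blast
  show False
  proof (cases "v0 \<in> S")
    case False
    have cc: "\<forall>u\<in>S. c u \<le> c' u" using False c' by (auto simp: topple_def)
    obtain v where v: "v \<in> S" "card {w\<in>S. adj n R v w} \<le> c v"
      using nf S unfolding noFSC_def by blast
    have "c v \<le> c' v" using cc v(1) by blast
    hence "card {w\<in>S. adj n R v w} \<le> c' v" using v(2) by linarith
    thus False using ne v(1) by blast
  next
    case True
    define S' where "S' = S - {v0}"
    show False
    proof (cases "S' = {}")
      case True
      hence "S = {v0}" using \<open>v0 \<in> S\<close> S'_def by blast
      hence "{w\<in>S. adj n R v0 w} = {}" using adj_range by auto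
      hence "card {w\<in>S. adj n R v0 w} = 0" by (simp only: card.empty)
      moreover have "\<not> card {w\<in>S. adj n R v0 w} \<le> c' v0" using ne \<open>v0 \<in> S\<close> by blast
      ultimately show False by linarith
    next
      case False
      have "S' \<subseteq> {1..n}" using S(1) by (auto simp: S'_def)
      then obtain u where u: "u \<in> S'" "card {w\<in>S'. adj n R u w} \<le> c u"
        using nf False unfolding noFSC_def by blast
      have uv: "u \<noteq> v0" "u \<in> {1..n}" "u \<in> S" using u(1) S(1) by (auto simp: S'_def)
      have cu: "c' u = c u + (if adj n R v0 u then 1 else 0)" using uv c' by (simp add: topple_def)
      have fS': "finite {w\<in>S'. adj n R u w}" using fS by (simp add: S'_def)
      have "card {w\<in>S. adj n R u w} \<le> c' u"
      proof (cases "adj n R u v0")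
        case True
        have "{w\<in>S. adj n R u w} = insert v0 {w\<in>S'. adj n R u w}"
          using True \<open>v0 \<in> S\<close> by (auto simp: S'_def)
        moreover have "v0 \<notin> {w\<in>S'. adj n R u w}" by (simp add: S'_def)
        ultimately have "card {w\<in>S. adj n R u w} = Suc (card {w\<in>S'. adj n R u w})"
          using fS' by simp
        moreover have "c' u = c u + 1" using cu True adj_sym[of u v0] by simp
        ultimately show ?thesis using u(2) by linarith
      next
        case False
        have "{w\<in>S. adj n R u w} = {w\<in>S'. adj n R u w}"
          using False by (auto simp: S'_def)
        moreover have "c' u = c u" using cu False adj_sym[of u v0] by simp
        ultimately show ?thesis using u(2) by simp
      qed
      thus False using ne uv by blast
    qed
  qed
qed

lemma noFSC_steps:
  assumes "(topple_step n R)\<^sup>*\<^sup>* c c'" "noFSC c"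
  shows "noFSC c'"
  using assms by (induction rule: rtranclp_induct) (auto intro: noFSC_step)

lemma noFSC_all:
  assumes st: "stable n R c" and nf: "noFSC c"
  shows "TopI c = {0..n}"
proof (rule ccontr)
  assume ne: "TopI c \<noteq> {0..n}"
  define S where "S = {1..n} - TopI c"
  have "S \<noteq> {}"
  proof
    assume "S = {}"
    hence "{1..n} \<subseteq> TopI c" by (auto simp: S_def)
    have "{0..n} \<subseteq> TopI c"
    proof
      fix x assume "x \<in> {0..n}"
      thus "x \<in> TopI c" using zero_TopI[of c] \<open>{1..n} \<subseteq> TopI c\<close> by (cases "x = 0") auto
    qed
    thus False using ne TopI_sub by blast
  qed
  then obtain v where v: "v \<in> S" "card {w\<in>S. adj n R v w} \<le> c v"
    using nf unfolding noFSC_def S_def by blast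
  have v1: "v \<in> {1..n}" "v \<notin> TopI c" using v(1) by (auto simp: S_def)
  have "nb v = {w\<in>S. adj n R v w} \<union> {w\<in>TopI c. adj n R v w}"
  proof (rule set_eqI)
    fix x show "x \<in> nb v \<longleftrightarrow> x \<in> {w\<in>S. adj n R v w} \<union> {w\<in>TopI c. adj n R v w}"
      using zero_TopI[of c] TopI_sub[of c] by (cases "x = 0") (auto simp: nb_def S_def)
  qed
  moreover have "card ({w\<in>S. adj n R v w} \<union> {w\<in>TopI c. adj n R v w}) = card {w\<in>S. adj n R v w} + card {w\<in>TopI c. adj n R v w}"
    by (rule card_Un_disjoint) (auto simp: S_def)
  ultimately have "deg n R v = card {w\<in>S. adj n R v w} + card {w\<in>TopI c. adj n R v w}"
    unfolding deg_nb by simp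
  thus False using limit[OF st v1] v(2) by simp
qed

lemma recurrent_all:
  assumes "recurrent n R c"
  shows "stable n R c" "TopI c = {0..n}"
proof -
  show st: "stable n R c" using assms by (simp add: recurrent_def)
  obtain d where "(topple_step n R)\<^sup>*\<^sup>* (\<lambda>u. cmax n R u + d u) c"
    using assms by (auto simp: recurrent_def)
  moreover have "noFSC (\<lambda>u. cmax n R u + d u)" by (rule noFSC_cmax) simp
  ultimately have "noFSC c" by (rule noFSC_steps)
  thus "TopI c = {0..n}" using noFSC_all st by blast
qed

end


context fer begin

definition lev :: "(nat \<Rightarrow> nat) \<Rightarrow> nat \<Rightarrow> nat" where
  "lev c v = canon_index n R c v"
definition after :: "(nat \<Rightarrow> nat) \<Rightarrow> nat \<Rightarrow> nat" where
  "after l v = card {u\<in>{0..n}. adj n R v u \<and> l v < l u}"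
definition before :: "(nat \<Rightarrow> nat) \<Rightarrow> nat \<Rightarrow> nat" where
  "before l v = card {u\<in>{0..n}. adj n R v u \<and> l u < l v}"
definition prv :: "(nat \<Rightarrow> nat) \<Rightarrow> nat \<Rightarrow> nat" where
  "prv l v = card {u\<in>{0..n}. adj n R v u \<and> Suc (l u) = l v}"
definition valid :: "(nat \<Rightarrow> nat) \<Rightarrow> bool" where
  "valid l \<longleftrightarrow> l 0 = 0 \<and> (\<forall>v\<in>{1..n}. 0 < l v \<and> (v \<in> R \<longleftrightarrow> even (l v)))"
definition good :: "(nat \<Rightarrow> nat) \<Rightarrow> (nat \<Rightarrow> nat) \<Rightarrow> bool" where
  "good l c \<longleftrightarrow> valid l \<and> (\<forall>v\<in>{1..n}. after l v \<le> c v \<and> c v < after l v + prv l v)"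

lemma valid_par: "valid l \<Longrightarrow> u \<le> n \<Longrightarrow> (u \<in> R \<longleftrightarrow> even (l u))"
  using R0 by (cases "u = 0") (auto simp: valid_def)

lemma valid_zero: assumes "valid l" "u \<le> n" "l u = 0" shows "u = 0"
proof (rule ccontr)
  assume "u \<noteq> 0"
  hence "u \<in> {1..n}" using assms(2) by simp
  hence "0 < l u" using assms(1) unfolding valid_def by blast
  thus False using assms(3) by simp
qed

lemma valid_adj_par: "valid l \<Longrightarrow> adj n R v u \<Longrightarrow> even (l u) \<longleftrightarrow> odd (l v)"
  using adj_range[of v u] valid_par[of l u] valid_par[of l v] by auto

lemma valid_adj_ne: "valid l \<Longrightarrow> adj n R v u \<Longrightarrow> l u \<noteq> l v"
  using valid_adj_par by fastforce

lemma card_union3: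
  assumes "finite A" "finite B" "A \<inter> B = {}"
  shows "card (A \<union> B) = card A + card B"
  using assms card_Un_disjoint by blast

lemma deg_split: assumes "valid l" shows "deg n R v = before l v + after l v"
proof -
  have "nb v = {u\<in>{0..n}. adj n R v u \<and> l u < l v} \<union> {u\<in>{0..n}. adj n R v u \<and> l v < l u}"
    using valid_adj_ne[OF assms, of v] by (auto simp: nb_def) (meson linorder_neqE_nat)
  moreover have "card ({u\<in>{0..n}. adj n R v u \<and> l u < l v} \<union> {u\<in>{0..n}. adj n R v u \<and> l v < l u})
     = before l v + after l v" unfolding before_def after_def by (rule card_union3) auto
  ultimately show ?thesis by (simp add: deg_nb)
qed

lemma prv_le_before: "prv l v \<le> before l v"
  unfolding prv_def before_def by (rule card_mono) auto

lemma good_stable: assumes "good l c" shows "stable n R c"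
  unfolding stable_def
proof
  fix v assume v: "v \<in> {1..n}"
  have "c v < after l v + prv l v" using assms v by (simp add: good_def)
  moreover have "deg n R v = before l v + after l v" using assms deg_split by (simp add: good_def)
  moreover have "prv l v \<le> before l v" by (rule prv_le_before)
  ultimately show "c v < deg n R v" by linarith
qed

lemma good_prv: "good l c \<Longrightarrow> v \<in> {1..n} \<Longrightarrow> 0 < prv l v"
  unfolding good_def by fastforce

definition alltop :: "(nat \<Rightarrow> nat) \<Rightarrow> bool" where
  "alltop c \<longleftrightarrow> stable n R c \<and> TopI c = {0..n}"

lemma lev_in: assumes "alltop c" "v \<le> n" shows "v \<in> blk c (lev c v)"
proof -
  have "\<exists>k. v \<in> blk c k" using assms by (auto simp: alltop_def TopI_def)
  thus ?thesis unfolding lev_def canon_index_def blk_def by (rule LeastI_ex)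
qed

lemma lev_eq: assumes "alltop c" "v \<in> blk c k" shows "lev c v = k"
proof -
  have "v \<le> n" using blk_sub[of c k] assms(2) by auto
  hence "v \<in> blk c (lev c v)" using lev_in assms(1) by blast
  thus ?thesis using blk_unique assms by (auto simp: alltop_def)
qed

lemma blk_lev: assumes "alltop c" shows "blk c k = {v\<in>{0..n}. lev c v = k}"
  using lev_in[OF assms] lev_eq[OF assms] blk_sub by fastforce

lemma Top_lev: assumes "alltop c" shows "Top c k = {v\<in>{0..n}. lev c v \<le> k}"
  unfolding Top_def using blk_lev[OF assms] by auto

lemma valid_lev: assumes "alltop c" shows "valid (lev c)"
  unfolding valid_def
proof (intro conjI ballI)
  show "lev c 0 = 0" using lev_eq[OF assms] blk_0 by simp
next
  fix v assume v: "v \<in> {1..n}"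
  have vb: "v \<in> blk c (lev c v)" using lev_in[OF assms] v by simp
  show "0 < lev c v"
  proof (rule ccontr)
    assume "\<not> 0 < lev c v" hence "lev c v = 0" by simp
    thus False using vb v blk_0 by simp
  qed
  then obtain k where "lev c v = Suc k" using gr0_implies_Suc by blast
  thus "v \<in> R \<longleftrightarrow> even (lev c v)" using blk_Suc_type vb by simp
qed

lemma blk_mem_iff:
  assumes "u \<in> {1..n}" "(u \<in> R) = even (Suc k)"
  shows "u \<in> blk c (Suc k) \<longleftrightarrow> int (deg n R u) \<le> X c k u"
  using assms unfolding blk_Suc by (auto simp: cols_iff)

lemma good_lev: assumes "alltop c" shows "good (lev c) c"
proof -
  let ?l = "lev c"
  have va: "valid ?l" by (rule valid_lev[OF assms])
  have st: "stable n R c" using assms by (simp add: alltop_def)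
  { fix v assume v: "v \<in> {1..n}"
    have vb: "v \<in> blk c (?l v)" using lev_in[OF assms] v by simp
    have pos: "0 < ?l v" using va v by (simp add: valid_def)
    have par: "(v \<in> R) = even (?l v)" using va v by (simp add: valid_def)
    have ds: "deg n R v = before ?l v + after ?l v" by (rule deg_split[OF va])
    have Xk: "\<And>k. k < ?l v \<Longrightarrow> X c k v = int (c v) + int (card {w\<in>{0..n}. adj n R v w \<and> ?l w \<le> k})"
    proof -
      fix k assume k: "k < ?l v"
      have "v \<notin> Top c k" using k Top_lev[OF assms] by auto
      moreover have "{w\<in>Top c k. adj n R v w} = {w\<in>{0..n}. adj n R v w \<and> ?l w \<le> k}"
        using Top_lev[OF assms] by auto
      ultimately show "X c k v = int (c v) + int (card {w\<in>{0..n}. adj n R v w \<and> ?l w \<le> k})"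
        using X_formula[OF st v, of k] by simp
    qed
    obtain k where k: "?l v = Suc k" using pos gr0_implies_Suc by blast
    have "int (deg n R v) \<le> X c k v" using blk_mem_iff[of v k c] v par k vb by simp
    moreover have "{w\<in>{0..n}. adj n R v w \<and> ?l w \<le> k} = {w\<in>{0..n}. adj n R v w \<and> ?l w < ?l v}"
      using k by auto
    ultimately have "deg n R v \<le> c v + before ?l v" using Xk[of k] k by (simp add: before_def)
    hence A: "after ?l v \<le> c v" using ds by simp
    have B: "c v < after ?l v + prv ?l v"
    proof (cases "?l v \<ge> 3")
      case True
      define k' where "k' = ?l v - 3"
      have k'': "?l v = Suc (Suc (Suc k'))" using True by (simp add: k'_def)
      have "v \<notin> blk c (Suc k')" using lev_eq[OF assms] k'' by force
      moreover have "(v \<in> R) = even (Suc k')" using par k'' by simp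
      ultimately have "\<not> int (deg n R v) \<le> X c k' v" using blk_mem_iff[of v k' c] v by simp
      hence lt: "c v + card {w\<in>{0..n}. adj n R v w \<and> ?l w \<le> k'} < deg n R v"
        using Xk[of k'] k'' by simp
      have "nb v = {w\<in>{0..n}. adj n R v w \<and> ?l w \<le> k'} \<union>
            ({u\<in>{0..n}. adj n R v u \<and> Suc (?l u) = ?l v} \<union> {u\<in>{0..n}. adj n R v u \<and> ?l v < ?l u})"
      proof (rule set_eqI)
        fix w show "w \<in> nb v \<longleftrightarrow> w \<in> {w\<in>{0..n}. adj n R v w \<and> ?l w \<le> k'} \<union>
            ({u\<in>{0..n}. adj n R v u \<and> Suc (?l u) = ?l v} \<union> {u\<in>{0..n}. adj n R v u \<and> ?l v < ?l u})"
        proof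
          assume w: "w \<in> nb v"
          hence aw: "adj n R v w" "w \<le> n" by (auto simp: nb_def)
          have "even (?l w) \<longleftrightarrow> odd (?l v)" using valid_adj_par[OF va aw(1)] .
          hence "?l w \<noteq> Suc k'" "?l w \<noteq> ?l v" using k'' by auto
          thus "w \<in> {w\<in>{0..n}. adj n R v w \<and> ?l w \<le> k'} \<union>
            ({u\<in>{0..n}. adj n R v u \<and> Suc (?l u) = ?l v} \<union> {u\<in>{0..n}. adj n R v u \<and> ?l v < ?l u})"
            using aw k'' by auto
        qed (auto simp: nb_def)
      qed
      hence "deg n R v = card {w\<in>{0..n}. adj n R v w \<and> ?l w \<le> k'} + (prv ?l v + after ?l v)"
      proof -
        let ?A = "{w\<in>{0..n}. adj n R v w \<and> ?l w \<le> k'}"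
        let ?B = "{u\<in>{0..n}. adj n R v u \<and> Suc (?l u) = ?l v}"
        let ?C = "{u\<in>{0..n}. adj n R v u \<and> ?l v < ?l u}"
        have c2: "card (?B \<union> ?C) = card ?B + card ?C" by (rule card_union3) auto
        have "?A \<inter> (?B \<union> ?C) = {}" using k'' by auto
        hence c1: "card (?A \<union> (?B \<union> ?C)) = card ?A + card (?B \<union> ?C)" by (intro card_union3) auto
        assume "nb v = ?A \<union> (?B \<union> ?C)"
        thus ?thesis unfolding deg_nb prv_def after_def using c1 c2 by simp
      qed
      thus ?thesis using lt by simp
    next
      case False
      have "{u\<in>{0..n}. adj n R v u \<and> ?l u < ?l v} = {u\<in>{0..n}. adj n R v u \<and> Suc (?l u) = ?l v}"
      proof (rule set_eqI, rule iffI)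
        fix u assume u: "u \<in> {u\<in>{0..n}. adj n R v u \<and> ?l u < ?l v}"
        show "u \<in> {u\<in>{0..n}. adj n R v u \<and> Suc (?l u) = ?l v}"
        proof (cases "?l u = 0")
          case True
          hence "u = 0" using valid_zero[OF va] u by auto
          hence "v \<notin> R" using u adj_0 adj_sym by auto
          moreover have "?l v = 1 \<or> ?l v = 2" using False pos by linarith
          ultimately have "?l v = 1" using par by auto
          thus ?thesis using u True by auto
        next
          case False
          have "even (?l u) \<longleftrightarrow> odd (?l v)" using valid_adj_par[OF va] u by auto
          thus ?thesis using u False \<open>\<not> 3 \<le> ?l v\<close> by auto
        qed
      qed auto
      hence "before ?l v = prv ?l v" by (simp add: before_def prv_def)
      moreover have "c v < deg n R v" using st v by (simp add: stable_def)
      ultimately show ?thesis using ds by simp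
    qed
    note A B }
  thus ?thesis using va by (simp add: good_def)
qed

end


context fer begin

lemma card_nb_le: "card {w\<in>{0..n}. adj n R u w \<and> P w} \<le> deg n R u"
  unfolding deg_nb by (rule card_mono) (auto simp: nb_def)

lemma good_blk_all:
  assumes g: "good l c"
  shows "\<forall>i\<le>k. blk c i = {v\<in>{0..n}. l v = i}"
proof (induction k)
  have va: "valid l" using g by (simp add: good_def)
  case 0
  have "blk c 0 = {v\<in>{0..n}. l v = 0}"
    using valid_zero[OF va] va by (auto simp: blk_0 valid_def)
  thus ?case by simp
next
  case (Suc k)
  have va: "valid l" using g by (simp add: good_def)
  have st: "stable n R c" by (rule good_stable[OF g])
  have Tk: "Top c k = {v\<in>{0..n}. l v \<le> k}" using Suc unfolding Top_def by auto
  have new: "blk c (Suc k) = {v\<in>{0..n}. l v = Suc k}"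
  proof (rule set_eqI)
    fix u
    show "u \<in> blk c (Suc k) \<longleftrightarrow> u \<in> {v\<in>{0..n}. l v = Suc k}"
    proof (cases "u \<in> {1..n} \<and> (u \<in> R) = even (Suc k)")
      case False
      hence "u \<notin> blk c (Suc k)" using blk_Suc_type by blast
      moreover have "u \<notin> {v\<in>{0..n}. l v = Suc k}"
      proof
        assume u: "u \<in> {v\<in>{0..n}. l v = Suc k}"
        have "u \<noteq> 0"
        proof
          assume "u = 0" hence "l u = 0" using va by (simp add: valid_def)
          thus False using u by simp
        qed
        hence "u \<in> {1..n}" using u by auto
        thus False using False u valid_par[OF va, of u] by auto
      qed
      ultimately show ?thesis by blast
    next
      case True
      hence u1: "u \<in> {1..n}" and ty: "(u \<in> R) = even (Suc k)" by auto
      have par: "(u \<in> R) = even (l u)" using va u1 by (simp add: valid_def)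
      have cu: "after l u \<le> c u" "c u < after l u + prv l u" using g u1 by (auto simp: good_def)
      have ds: "deg n R u = before l u + after l u" by (rule deg_split[OF va])
      have memiff: "u \<in> blk c (Suc k) \<longleftrightarrow> int (deg n R u) \<le> X c k u"
        by (rule blk_mem_iff[OF u1 ty])
      have Xf: "X c k u = int (c u) + int (card {w\<in>{0..n}. adj n R u w \<and> l w \<le> k})
         - (if l u \<le> k then int (deg n R u) else 0)"
      proof -
        have "{w\<in>Top c k. adj n R u w} = {w\<in>{0..n}. adj n R u w \<and> l w \<le> k}" using Tk by auto
        moreover have "u \<in> Top c k \<longleftrightarrow> l u \<le> k" using Tk u1 by auto
        ultimately show ?thesis using X_formula[OF st u1, of k] by simp
      qed
      have cardle: "card {w\<in>{0..n}. adj n R u w \<and> l w \<le> k} \<le> deg n R u"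
        by (rule card_nb_le)
      have stu: "c u < deg n R u" using st u1 by (simp add: stable_def)
      consider (a) "l u \<le> k" | (b) "l u = Suc k" | (c) "Suc k < l u" by linarith
      thus ?thesis
      proof cases
        case a
        hence "X c k u < int (deg n R u)" using Xf cardle stu by simp
        thus ?thesis using memiff a by auto
      next
        case b
        have "{w\<in>{0..n}. adj n R u w \<and> l w \<le> k} = {w\<in>{0..n}. adj n R u w \<and> l w < l u}"
          using b by auto
        hence "X c k u = int (c u) + int (before l u)" using Xf b by (simp add: before_def)
        hence "int (deg n R u) \<le> X c k u" using ds cu by simp
        thus ?thesis using memiff b u1 by auto
      next
        case c
        have "even (l u) = even (Suc k)" using par ty by simp
        hence c3: "Suc (Suc k) < l u" using c by presburger
        let ?A = "{w\<in>{0..n}. adj n R u w \<and> l w \<le> k}"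
        let ?B = "{w\<in>{0..n}. adj n R u w \<and> Suc (l w) = l u}"
        let ?C = "{w\<in>{0..n}. adj n R u w \<and> l u < l w}"
        have c2: "card (?B \<union> ?C) = card ?B + card ?C" by (rule card_union3) auto
        have "?A \<inter> (?B \<union> ?C) = {}" using c3 by auto
        hence c1: "card (?A \<union> (?B \<union> ?C)) = card ?A + card (?B \<union> ?C)" by (intro card_union3) auto
        have "card (?A \<union> (?B \<union> ?C)) \<le> deg n R u" unfolding deg_nb by (rule card_mono) (auto simp: nb_def)
        hence "card ?A + prv l u + after l u \<le> deg n R u" using c1 c2 by (simp add: prv_def after_def)
        hence "X c k u < int (deg n R u)" using Xf c cu by simp
        thus ?thesis using memiff c by auto
      qed
    qed
  qed
  show ?case using Suc new by (auto simp: le_Suc_eq)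
qed

lemma good_blk: "good l c \<Longrightarrow> blk c k = {v\<in>{0..n}. l v = k}"
  using good_blk_all by blast

lemma good_alltop: assumes g: "good l c" shows "alltop c"
proof -
  have "TopI c = {0..n}" using good_blk[OF g] by (auto simp: TopI_def)
  thus ?thesis using good_stable[OF g] by (simp add: alltop_def)
qed

lemma good_lev_eq: assumes g: "good l c" "v \<le> n" shows "lev c v = l v"
  using lev_eq[OF good_alltop[OF g(1)]] good_blk[OF g(1)] g(2) by auto

end


context fer begin

definition topS :: "nat set \<Rightarrow> (nat \<Rightarrow> nat) \<Rightarrow> nat \<Rightarrow> nat" where
  "topS A x = (\<lambda>u. if u \<in> {1..n} then x u + card {w\<in>A. adj n R w u} - (if u \<in> A then deg n R u else 0) else x u)"

lemma topS_steps:
  assumes "finite A" "A \<subseteq> {1..n}" "\<forall>u\<in>A. \<forall>w\<in>A. \<not> adj n R u w" "\<forall>u\<in>A. deg n R u \<le> x u"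
  shows "(topple_step n R)\<^sup>*\<^sup>* x (topS A x)"
  using assms
proof (induction A rule: finite_induct)
  case empty
  have "topS {} x = x" by (auto simp: topS_def)
  thus ?case by simp
next
  case (insert a A)
  have IH: "(topple_step n R)\<^sup>*\<^sup>* x (topS A x)" using insert by auto
  have a1: "a \<in> {1..n}" using insert by auto
  have na: "\<And>w. w \<in> insert a A \<Longrightarrow> \<not> adj n R w a"
  proof -
    fix w assume "w \<in> insert a A"
    hence "\<not> adj n R a w" using insert.prems(2) by blast
    thus "\<not> adj n R w a" using adj_sym[of w a] by simp
  qed
  have e0: "{w\<in>A. adj n R w a} = {}" using na by auto
  have e0': "{w\<in>insert a A. adj n R w a} = {}" using na by auto
  have c0: "card {w\<in>A. adj n R w a} = 0" using e0 by (simp only: card.empty)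
  have c0': "card {w\<in>insert a A. adj n R w a} = 0" using e0' by (simp only: card.empty)
  have ta: "topS A x a = x a" using a1 c0 insert.hyps(2) by (simp add: topS_def)
  have legal: "deg n R a \<le> topS A x a" using ta insert.prems(3) by simp
  have eq: "topple n R a (topS A x) = topS (insert a A) x"
  proof (rule ext)
    fix u
    show "topple n R a (topS A x) u = topS (insert a A) x u"
    proof (cases "u = a")
      case True
      thus ?thesis using ta c0' a1 by (simp add: topple_def topS_def)
    next
      case ua: False
      show ?thesis
      proof (cases "u \<in> {1..n}")
        case False
        have t1: "topS A x u = x u" "topS (insert a A) x u = x u" using False by (auto simp: topS_def)
        have "topple n R a (topS A x) u = topS A x u" using False ua by (auto simp: topple_def)
        thus ?thesis using t1 by simp
      next
        case u1: True
        have fA: "finite {w\<in>A. adj n R w u}" using insert.hyps(1) by simp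
        have cins: "card {w\<in>insert a A. adj n R w u} = card {w\<in>A. adj n R w u} + (if adj n R a u then 1 else 0)"
        proof (cases "adj n R a u")
          case True
          hence "{w\<in>insert a A. adj n R w u} = insert a {w\<in>A. adj n R w u}" by auto
          thus ?thesis using fA insert.hyps(2) True by simp
        next
          case False
          hence "{w\<in>insert a A. adj n R w u} = {w\<in>A. adj n R w u}" by auto
          thus ?thesis using False by simp
        qed
        show ?thesis
        proof (cases "u \<in> A")
          case True
          hence "\<not> adj n R a u" using insert.prems(2) by blast
          moreover have "deg n R u \<le> x u" using insert.prems(3) True by blast
          have e1: "topple n R a (topS A x) u = topS A x u" using ua \<open>\<not> adj n R a u\<close> by (simp add: topple_def)
          have "card {w\<in>insert a A. adj n R w u} = card {w\<in>A. adj n R w u}" using cins \<open>\<not> adj n R a u\<close> by simp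
          hence "topS (insert a A) x u = topS A x u" using u1 True by (simp add: topS_def)
          thus ?thesis using e1 by simp
        next
          case False
          have e1: "topple n R a (topS A x) u = topS A x u + (if adj n R a u then 1 else 0)"
            using ua u1 by (simp add: topple_def)
          have e2: "topS A x u = x u + card {w\<in>A. adj n R w u}" using u1 False by (simp add: topS_def)
          have e3: "topS (insert a A) x u = x u + card {w\<in>insert a A. adj n R w u}" using u1 False ua by (simp add: topS_def)
          show ?thesis using e1 e2 e3 cins by simp
        qed
      qed
    qed
  qed
  have "topple_step n R (topS A x) (topS (insert a A) x)"
    unfolding topple_step_def
  proof (rule bexI[of _ a])
    show "deg n R a \<le> topS A x a \<and> topS (insert a A) x = topple n R a (topS A x)"
      using legal eq by simp
  qed (rule a1)
  thus ?case using IH by simp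
qed

definition beta :: "nat \<Rightarrow> nat" where
  "beta u = (if adj n R 0 u then 1 else 0)"

lemma before_split:
  assumes va: "valid l" and u1: "u \<in> {1..n}"
  shows "before l u = beta u + card {w\<in>{1..n}. adj n R w u \<and> l w < l u}"
proof -
  have pos: "0 < l u" using va u1 by (simp add: valid_def)
  have l0: "l 0 = 0" using va by (simp add: valid_def)
  have "{w\<in>{0..n}. adj n R u w \<and> l w < l u} = (if adj n R 0 u then {0} else {}) \<union> {w\<in>{1..n}. adj n R w u \<and> l w < l u}"
  proof (rule set_eqI)
    fix x show "x \<in> {w\<in>{0..n}. adj n R u w \<and> l w < l u} \<longleftrightarrow> x \<in> (if adj n R 0 u then {0} else {}) \<union> {w\<in>{1..n}. adj n R w u \<and> l w < l u}"
      using pos l0 adj_sym[of u x] adj_sym[of 0 u] by (cases "x = 0") auto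
  qed
  moreover have "card ((if adj n R 0 u then {0} else {}) \<union> {w\<in>{1..n}. adj n R w u \<and> l w < l u})
     = card (if adj n R 0 u then {0::nat} else {}) + card {w\<in>{1..n}. adj n R w u \<and> l w < l u}"
    by (rule card_union3) auto
  ultimately show ?thesis by (simp add: before_def beta_def)
qed

lemma deg_beta:
  assumes u1: "u \<in> {1..n}"
  shows "deg n R u = beta u + card {w\<in>{1..n}. adj n R w u}"
proof -
  have "nb u = (if adj n R 0 u then {0} else {}) \<union> {w\<in>{1..n}. adj n R w u}"
  proof (rule set_eqI)
    fix x show "x \<in> nb u \<longleftrightarrow> x \<in> (if adj n R 0 u then {0} else {}) \<union> {w\<in>{1..n}. adj n R w u}"
      using adj_sym[of u x] adj_sym[of 0 u] adj_range[of u x] by (cases "x = 0") (auto simp: nb_def)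
  qed
  moreover have "card ((if adj n R 0 u then {0} else {}) \<union> {w\<in>{1..n}. adj n R w u})
     = card (if adj n R 0 u then {0::nat} else {}) + card {w\<in>{1..n}. adj n R w u}"
    by (rule card_union3) auto
  ultimately show ?thesis by (simp add: deg_nb beta_def)
qed

definition zk :: "(nat \<Rightarrow> nat) \<Rightarrow> (nat \<Rightarrow> nat) \<Rightarrow> nat \<Rightarrow> nat \<Rightarrow> nat" where
  "zk l y k = (\<lambda>u. if u \<in> {1..n} then y u + card {w\<in>{1..n}. adj n R w u \<and> l w \<le> k}
                    - (if l u \<le> k then deg n R u else 0) else y u)"

lemma round:
  assumes va: "valid l" and ca: "\<forall>u\<in>{1..n}. after l u \<le> c u"
    and yc: "\<forall>u\<in>{1..n}. c u + beta u \<le> y u"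
  shows "(topple_step n R)\<^sup>*\<^sup>* y (\<lambda>u. if u \<in> {1..n} then y u - beta u else y u)"
proof -
  have legal: "\<And>u k. u \<in> {1..n} \<Longrightarrow> l u \<le> Suc k \<Longrightarrow> deg n R u \<le> y u + card {w\<in>{1..n}. adj n R w u \<and> l w \<le> k}"
  proof -
    fix u k assume u1: "u \<in> {1..n}" and lk: "l u \<le> Suc k"
    have "card {w\<in>{1..n}. adj n R w u \<and> l w < l u} \<le> card {w\<in>{1..n}. adj n R w u \<and> l w \<le> k}"
      using lk by (intro card_mono) auto
    moreover have "deg n R u = before l u + after l u" by (rule deg_split[OF va])
    moreover note before_split[OF va u1]
    moreover have "after l u \<le> c u" "c u + beta u \<le> y u" using ca yc u1 by auto
    ultimately show "deg n R u \<le> y u + card {w\<in>{1..n}. adj n R w u \<and> l w \<le> k}" by linarith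
  qed
  have z0: "zk l y 0 = y"
  proof (rule ext)
    fix u
    have "\<And>w. w \<in> {1..n} \<Longrightarrow> 0 < l w" using va by (simp add: valid_def)
    hence "{w\<in>{1..n}. adj n R w u \<and> l w \<le> 0} = {}" by fastforce
    thus "zk l y 0 u = y u" using \<open>\<And>w. w \<in> {1..n} \<Longrightarrow> 0 < l w\<close>[of u] by (auto simp: zk_def)
  qed
  have steps: "\<And>k. (topple_step n R)\<^sup>*\<^sup>* y (zk l y k)"
  proof -
    fix k show "(topple_step n R)\<^sup>*\<^sup>* y (zk l y k)"
    proof (induction k)
      case 0 thus ?case using z0 by simp
    next
      case (Suc k)
      define A where "A = {w\<in>{1..n}. l w = Suc k}"
      have fA: "finite A" "A \<subseteq> {1..n}" by (auto simp: A_def)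
      have nadj: "\<forall>u\<in>A. \<forall>w\<in>A. \<not> adj n R u w"
      proof (intro ballI notI)
        fix u w assume "u \<in> A" "w \<in> A" "adj n R u w"
        thus False using valid_adj_ne[OF va, of u w] by (simp add: A_def)
      qed
      have leg: "\<forall>u\<in>A. deg n R u \<le> zk l y k u"
      proof
        fix u assume "u \<in> A"
        hence u1: "u \<in> {1..n}" and lu: "l u = Suc k" by (auto simp: A_def)
        have "zk l y k u = y u + card {w\<in>{1..n}. adj n R w u \<and> l w \<le> k}"
          using u1 lu by (simp add: zk_def)
        thus "deg n R u \<le> zk l y k u" using legal[OF u1] lu by simp
      qed
      have eq: "topS A (zk l y k) = zk l y (Suc k)"
      proof (rule ext)
        fix u
        show "topS A (zk l y k) u = zk l y (Suc k) u"
        proof (cases "u \<in> {1..n}")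
          case False thus ?thesis by (auto simp: topS_def zk_def A_def)
        next
          case u1: True
          let ?ck = "card {w\<in>{1..n}. adj n R w u \<and> l w \<le> k}"
          let ?a = "card {w\<in>A. adj n R w u}"
          have "{w\<in>{1..n}. adj n R w u \<and> l w \<le> Suc k} = {w\<in>{1..n}. adj n R w u \<and> l w \<le> k} \<union> {w\<in>A. adj n R w u}"
            by (auto simp: A_def)
          moreover have "card ({w\<in>{1..n}. adj n R w u \<and> l w \<le> k} \<union> {w\<in>A. adj n R w u}) = ?ck + ?a"
            by (rule card_union3) (auto simp: A_def)
          ultimately have cS: "card {w\<in>{1..n}. adj n R w u \<and> l w \<le> Suc k} = ?ck + ?a" by simp
          consider (a) "l u \<le> k" | (b) "l u = Suc k" | (c) "Suc k < l u" by linarith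
          thus ?thesis
          proof cases
            case a
            have "deg n R u \<le> y u + ?ck" using legal[OF u1] a by simp
            moreover have "u \<notin> A" using a by (auto simp: A_def)
            ultimately show ?thesis using u1 a cS by (simp add: topS_def zk_def)
          next
            case b
            have "?a = 0"
            proof -
              have "{w\<in>A. adj n R w u} = {}"
              proof (rule equals0I)
                fix w assume "w \<in> {w\<in>A. adj n R w u}"
                hence "adj n R w u" "l w = l u" using b by (auto simp: A_def)
                thus False using valid_adj_ne[OF va, of w u] by simp
              qed
              thus ?thesis by (simp only: card.empty)
            qed
            moreover have "u \<in> A" using u1 b by (simp add: A_def)
            ultimately show ?thesis using u1 b cS by (simp add: topS_def zk_def)
          next
            case c
            have "u \<notin> A" using c by (auto simp: A_def)
            thus ?thesis using u1 c cS by (simp add: topS_def zk_def)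
          qed
        qed
      qed
      have "(topple_step n R)\<^sup>*\<^sup>* (zk l y k) (topS A (zk l y k))"
        by (rule topS_steps[OF fA nadj leg])
      thus ?case using Suc.IH eq by simp
    qed
  qed
  define K where "K = Max (l ` {0..n})"
  have lK: "\<And>u. u \<le> n \<Longrightarrow> l u \<le> K" unfolding K_def by (intro Max_ge) auto
  have "zk l y K = (\<lambda>u. if u \<in> {1..n} then y u - beta u else y u)"
  proof (rule ext)
    fix u
    show "zk l y K u = (if u \<in> {1..n} then y u - beta u else y u)"
    proof (cases "u \<in> {1..n}")
      case False thus ?thesis by (auto simp: zk_def)
    next
      case u1: True
      have "{w\<in>{1..n}. adj n R w u \<and> l w \<le> K} = {w\<in>{1..n}. adj n R w u}" using lK by auto
      moreover have "l u \<le> K" using lK u1 by simp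
      ultimately show ?thesis using deg_beta[OF u1] u1 by (simp add: zk_def)
    qed
  qed
  thus ?thesis using steps[of K] by simp
qed

lemma good_recurrent:
  assumes g: "good l c" and z: "\<forall>u. u \<notin> {1..n} \<longrightarrow> c u = 0"
  shows "recurrent n R c"
proof -
  have va: "valid l" using g by (simp add: good_def)
  have ca: "\<forall>u\<in>{1..n}. after l u \<le> c u" using g by (simp add: good_def)
  define B where "B = 2 * n"
  define s where "s = (\<lambda>u. if u \<in> {1..n} then (if u \<in> R then c u + deg n R u else c u + B + 1 - deg n R u) else 0)"
  define y where "y = (\<lambda>M u. if u \<in> {1..n} then c u + M * beta u else 0)"
  define d where "d = (\<lambda>u. if u \<in> {1..n} then s u - cmax n R u else 0)"
  have dg: "\<And>u. u \<le> n \<Longrightarrow> deg n R u \<le> n" by (rule deg_le_n)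
  have sd: "(\<lambda>u. cmax n R u + d u) = s"
  proof (rule ext)
    fix u show "cmax n R u + d u = s u"
    proof (cases "u \<in> {1..n}")
      case False thus ?thesis by (auto simp: cmax_def d_def s_def)
    next
      case True
      have "deg n R u \<le> n" using dg True by simp
      hence "cmax n R u \<le> s u" using True unfolding cmax_def s_def B_def
        by (cases "u \<in> R") simp_all
      thus ?thesis using True by (simp add: d_def)
    qed
  qed
  define A where "A = {u\<in>{1..n}. u \<in> R}"
  have step1: "(topple_step n R)\<^sup>*\<^sup>* s (topS A s)"
  proof (rule topS_steps)
    show "\<forall>u\<in>A. \<forall>w\<in>A. \<not> adj n R u w" using adj_range by (auto simp: A_def)
    show "\<forall>u\<in>A. deg n R u \<le> s u" by (auto simp: A_def s_def)
  qed (auto simp: A_def)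
  have s1: "topS A s = y B"
  proof (rule ext)
    fix u show "topS A s u = y B u"
    proof (cases "u \<in> {1..n}")
      case False thus ?thesis by (auto simp: topS_def s_def y_def)
    next
      case u1: True
      show ?thesis
      proof (cases "u \<in> R")
        case True
        have "{w\<in>A. adj n R w u} = {}" using True adj_range by (auto simp: A_def)
        moreover have "beta u = 0" using True adj_0 by (simp add: beta_def)
        ultimately show ?thesis using u1 True by (simp add: topS_def s_def y_def A_def)
      next
        case False
        have "{w\<in>A. adj n R w u} = {w\<in>{1..n}. adj n R w u}" using False adj_range by (auto simp: A_def)
        moreover have bu: "beta u = 1" using False u1 adj_0 by (simp add: beta_def)
        moreover have "deg n R u = 1 + card {w\<in>{1..n}. adj n R w u}" using deg_beta[OF u1] bu by simp
        moreover have "deg n R u \<le> n" using dg u1 by simp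
        ultimately show ?thesis using u1 False by (simp add: topS_def s_def y_def A_def B_def)
      qed
    qed
  qed
  have step2: "\<And>M. (topple_step n R)\<^sup>*\<^sup>* (y M) c"
  proof -
    fix M show "(topple_step n R)\<^sup>*\<^sup>* (y M) c"
    proof (induction M)
      case 0
      have "y 0 = c" using z by (auto simp: y_def)
      thus ?case by simp
    next
      case (Suc M)
      have "\<forall>u\<in>{1..n}. c u + beta u \<le> y (Suc M) u" by (auto simp: y_def)
      hence r: "(topple_step n R)\<^sup>*\<^sup>* (y (Suc M)) (\<lambda>u. if u \<in> {1..n} then y (Suc M) u - beta u else y (Suc M) u)"
        by (rule round[OF va ca])
      have "(\<lambda>u. if u \<in> {1..n} then y (Suc M) u - beta u else y (Suc M) u) = y M"
        by (auto simp: y_def)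
      thus ?case using r Suc.IH by simp
    qed
  qed
  have "(topple_step n R)\<^sup>*\<^sup>* (\<lambda>u. cmax n R u + d u) c"
    using sd step1 s1 step2[of B] by simp
  moreover have "\<forall>u. u \<notin> {1..n} \<longrightarrow> d u = 0" by (simp add: d_def)
  ultimately show ?thesis using good_stable[OF g] unfolding recurrent_def by blast
qed

end


context fer begin

lemma minrec_after:
  assumes va: "valid l" and bl: "\<And>k. blk c k = {v\<in>{0..n}. l v = k}" and j1: "j \<in> {1..n}"
  shows "minrec n R c j = after l j"
proof -
  have U: "\<And>i. canonU n R c i = {v\<in>{0..n}. l v = 2 * i}"
    using bl by (simp add: canonU_def blk_def)
  have V: "\<And>i. canonV n R c i = (if i = 0 then {} else {v\<in>{0..n}. l v = 2 * i - 1})"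
    using bl by (simp add: canonV_def blk_def)
  have jn: "j \<le> n" using j1 by simp
  have parj: "(j \<in> R) = even (l j)" using va j1 by (simp add: valid_def)
  show ?thesis
  proof (cases "j \<in> R")
    case True
    have ex: "\<exists>i. j \<in> canonU n R c i"
      using True parj jn by (auto simp: U intro!: exI[of _ "l j div 2"])
    have "{l'. \<exists>i k. j \<in> canonU n R c i \<and> i < k \<and> l' \<in> canonV n R c k \<and> j < l'}
        = {u\<in>{0..n}. adj n R j u \<and> l j < l u}"
    proof (rule set_eqI, rule iffI)
      fix u assume "u \<in> {l'. \<exists>i k. j \<in> canonU n R c i \<and> i < k \<and> l' \<in> canonV n R c k \<and> j < l'}"
      then obtain i k where h: "l j = 2 * i" "i < k" "u \<le> n" "l u = 2 * k - 1" "k \<noteq> 0" "j < u"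
        by (auto simp: U V split: if_splits)
      have "odd (l u)" using h by presburger
      hence "u \<notin> R" using valid_par[OF va h(3)] by simp
      hence "adj n R j u" using True h by (simp add: adj_row cell_iff)
      moreover have "l j < l u" using h by linarith
      ultimately show "u \<in> {u\<in>{0..n}. adj n R j u \<and> l j < l u}" using h by simp
    next
      fix u assume u: "u \<in> {u\<in>{0..n}. adj n R j u \<and> l j < l u}"
      hence un: "u \<le> n" and a: "adj n R j u" and lt: "l j < l u" by auto
      have "u \<notin> R" "j < u" using a True by (auto simp: adj_row cell_iff)
      hence ou: "odd (l u)" using valid_par[OF va un] by simp
      have ej: "even (l j)" using parj True by simp
      have "j \<in> canonU n R c (l j div 2)" using ej jn by (simp add: U)
      moreover have "u \<in> canonV n R c ((l u + 1) div 2)" using ou un by (auto simp: V elim!: oddE)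
      moreover have "l j div 2 < (l u + 1) div 2" using ej ou lt by (auto elim!: evenE oddE)
      ultimately show "u \<in> {l'. \<exists>i k. j \<in> canonU n R c i \<and> i < k \<and> l' \<in> canonV n R c k \<and> j < l'}"
        using \<open>j < u\<close> by blast
    qed
    thus ?thesis using ex j1 by (simp add: minrec_def after_def)
  next
    case False
    have nex: "\<not> (\<exists>i. j \<in> canonU n R c i)"
      using False parj by (auto simp: U)
    have "{l'. \<exists>i k. j \<in> canonV n R c i \<and> i \<le> k \<and> l' \<in> canonU n R c k \<and> l' < j}
        = {u\<in>{0..n}. adj n R j u \<and> l j < l u}"
    proof (rule set_eqI, rule iffI)
      fix u assume "u \<in> {l'. \<exists>i k. j \<in> canonV n R c i \<and> i \<le> k \<and> l' \<in> canonU n R c k \<and> l' < j}"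
      then obtain i k where h: "l j = 2 * i - 1" "i \<noteq> 0" "i \<le> k" "u \<le> n" "l u = 2 * k" "u < j"
        by (auto simp: U V split: if_splits)
      have "even (l u)" using h by presburger
      hence "u \<in> R" using valid_par[OF va h(4)] by simp
      hence "adj n R j u" using False h jn by (simp add: adj_col cell_iff)
      moreover have "l j < l u" using h by linarith
      ultimately show "u \<in> {u\<in>{0..n}. adj n R j u \<and> l j < l u}" using h by simp
    next
      fix u assume u: "u \<in> {u\<in>{0..n}. adj n R j u \<and> l j < l u}"
      hence un: "u \<le> n" and a: "adj n R j u" and lt: "l j < l u" by auto
      have "u \<in> R" "u < j" using a False by (auto simp: adj_col cell_iff)
      hence eu: "even (l u)" using valid_par[OF va un] by simp
      have oj: "odd (l j)" using parj False by simp
      have "j \<in> canonV n R c ((l j + 1) div 2)" using oj jn by (auto simp: V elim!: oddE)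
      moreover have "u \<in> canonU n R c (l u div 2)" using eu un by (simp add: U)
      moreover have "(l j + 1) div 2 \<le> l u div 2" using eu oj lt by (auto elim!: evenE oddE)
      ultimately show "u \<in> {l'. \<exists>i k. j \<in> canonV n R c i \<and> i \<le> k \<and> l' \<in> canonU n R c k \<and> l' < j}"
        using \<open>u < j\<close> by blast
    qed
    thus ?thesis using nex j1 by (simp add: minrec_def after_def)
  qed
qed

end


context fer begin

definition Sl :: "(nat \<Rightarrow> nat) \<Rightarrow> tableau" where
  "Sl l = (\<lambda>i j. cell n R i j \<and> l i < l j)"

lemma nb_row: "i \<in> R \<Longrightarrow> nb i = {j. cell n R i j}"
  by (auto simp: nb_def adj_row cell_iff)

lemma nb_col: "j \<notin> R \<Longrightarrow> nb j = {i. cell n R i j}"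
  using Rsub by (auto simp: nb_def adj_col cell_iff)

lemma finite_cell_row[simp]: "finite {j. cell n R i j \<and> P j}"
  by (rule finite_subset[of _ "{0..n}"]) (auto simp: cell_iff)
lemma finite_cell_col[simp]: "finite {i. cell n R i j \<and> P i}"
  by (rule finite_subset[of _ "{0..n}"]) (auto simp: cell_iff)

lemma S_EW:
  assumes va: "valid l" and pp: "\<forall>v\<in>{1..n}. 0 < prv l v"
  shows "Sl l \<in> EWtab n R"
  unfolding EWtab_def mem_Collect_eq
proof (intro conjI allI impI ballI)
  fix i j assume "Sl l i j" thus "cell n R i j" by (simp add: Sl_def)
next
  fix j assume c: "cell n R 0 j"
  hence "j \<in> {1..n}" by (auto simp: cell_iff)
  hence "0 < l j" using va by (simp add: valid_def)
  thus "Sl l 0 j" using c va by (simp add: Sl_def valid_def)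
next
  fix i assume i: "i \<in> R - {0}"
  hence i1: "i \<in> {1..n}" using Rsub by auto
  hence "0 < prv l i" using pp by blast
  hence "{u\<in>{0..n}. adj n R i u \<and> Suc (l u) = l i} \<noteq> {}" unfolding prv_def by (simp only: card_gt_0_iff) simp
  then obtain u where u: "u \<le> n" "adj n R i u" "Suc (l u) = l i" by auto
  have "cell n R i u" using u i by (simp add: adj_row)
  thus "\<exists>j. cell n R i j \<and> \<not> Sl l i j" using u by (auto simp: Sl_def)
next
  fix i i' j j' :: nat
  show "\<not> ((\<not> Sl l i j \<and> \<not> Sl l i' j' \<and> Sl l i j' \<and> Sl l i' j) \<or> (Sl l i j \<and> Sl l i' j' \<and> \<not> Sl l i j' \<and> \<not> Sl l i' j))"
    if "cell n R i j" "cell n R i j'" "cell n R i' j" "cell n R i' j'"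
    using that by (auto simp: Sl_def)
qed

lemma S_phi:
  assumes va: "valid l"
  shows "phi_TC n R (Sl l) = (\<lambda>i. if i \<in> {1..n} then after l i else 0)"
proof (rule ext)
  fix i
  show "phi_TC n R (Sl l) i = (if i \<in> {1..n} then after l i else 0)"
  proof (cases "i \<in> {1..n}")
    case False thus ?thesis by (auto simp: phi_TC_def)
  next
    case i1: True
    show ?thesis
    proof (cases "i \<in> R")
      case True
      have "{j. cell n R i j \<and> Sl l i j} = {u\<in>{0..n}. adj n R i u \<and> l i < l u}"
        using True by (auto simp: Sl_def adj_row cell_iff)
      thus ?thesis using i1 True by (simp add: phi_TC_def row_ones_def after_def)
    next
      case False
      have "{k. cell n R k i \<and> \<not> Sl l k i} = {u\<in>{0..n}. adj n R i u \<and> l i < l u}"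
      proof (rule set_eqI, rule iffI)
        fix k assume k: "k \<in> {k. cell n R k i \<and> \<not> Sl l k i}"
        hence a: "adj n R i k" using False by (simp add: adj_col)
        hence "l k \<noteq> l i" using valid_adj_ne[OF va a] by simp
        thus "k \<in> {u\<in>{0..n}. adj n R i u \<and> l i < l u}" using k a adj_range[OF a] by (auto simp: Sl_def)
      next
        fix k assume "k \<in> {u\<in>{0..n}. adj n R i u \<and> l i < l u}"
        thus "k \<in> {k. cell n R k i \<and> \<not> Sl l k i}" using False by (auto simp: Sl_def adj_col)
      qed
      thus ?thesis using i1 False by (simp add: phi_TC_def col_zeros_def after_def)
    qed
  qed
qed

lemma EW_rect:
  assumes T: "T \<in> EWtab n R" and ir: "i < r"
    and cells: "cell n R i c" "cell n R r c" "cell n R r cn" "cell n R i cn"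
    and v: "\<not> T i c" "T r c" "\<not> T r cn"
  shows "\<not> T i cn"
proof
  assume Tin: "T i cn"
  have rc: "\<forall>i i' j j'. i < i' \<longrightarrow> j < j' \<longrightarrow>
        cell n R i j \<longrightarrow> cell n R i j' \<longrightarrow> cell n R i' j \<longrightarrow> cell n R i' j' \<longrightarrow>
        \<not> ((\<not> T i j \<and> \<not> T i' j' \<and> T i j' \<and> T i' j) \<or>
           (T i j \<and> T i' j' \<and> \<not> T i j' \<and> \<not> T i' j))"
    using T unfolding EWtab_def by blast
  have "c \<noteq> cn" using v by auto
  then consider "c < cn" | "cn < c" by linarith
  thus False
  proof cases
    case 1
    thus False using rc[rule_format, OF ir 1 cells(1) cells(4) cells(2) cells(3)] v Tin by blast
  next
    case 2
    thus False using rc[rule_format, OF ir 2 cells(4) cells(1) cells(3) cells(2)] v Tin by blast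
  qed
qed

lemma comb:
  assumes T: "T \<in> EWtab n R"
  shows "finite XR \<Longrightarrow> XR \<subseteq> R \<Longrightarrow>
    (\<forall>i\<in>XR. \<exists>j\<in>XC. cell n R i j \<and> \<not> T i j) \<Longrightarrow>
    (\<forall>j\<in>XC. \<exists>i\<in>XR. cell n R i j \<and> T i j) \<Longrightarrow> XR = {}"
proof (induction "card XR" arbitrary: XR XC rule: less_induct)
  case less
  show ?case
  proof (rule ccontr)
    assume ne: "XR \<noteq> {}"
    define r where "r = Max XR"
    have rX: "r \<in> XR" using ne less.prems(1) by (simp add: r_def)
    have rmax: "\<And>i. i \<in> XR \<Longrightarrow> i \<le> r" using less.prems(1) by (simp add: r_def)
    define XR' where "XR' = XR - {r}"
    define XC' where "XC' = {c\<in>XC. \<exists>i\<in>XR'. cell n R i c \<and> T i c}"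
    obtain cn where cn: "cn \<in> XC" "cell n R r cn" "\<not> T r cn" using less.prems(3) rX by blast
    have h3: "\<forall>i\<in>XR'. \<exists>j\<in>XC'. cell n R i j \<and> \<not> T i j"
    proof
      fix i assume iX: "i \<in> XR'"
      hence ir: "i < r" using rmax by (auto simp: XR'_def le_neq_implies_less)
      obtain c where c: "c \<in> XC" "cell n R i c" "\<not> T i c" using less.prems(3) iX by (auto simp: XR'_def)
      show "\<exists>j\<in>XC'. cell n R i j \<and> \<not> T i j"
      proof (cases "c \<in> XC'")
        case True thus ?thesis using c by blast
      next
        case False
        obtain i2 where i2: "i2 \<in> XR" "cell n R i2 c" "T i2 c" using less.prems(4) c(1) by blast
        have "i2 \<notin> XR'" using False c(1) i2 unfolding XC'_def by blast
        hence "i2 = r" using i2(1) by (simp add: XR'_def)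
        hence Trc: "T r c" "cell n R r c" using i2 by auto
        have "i \<in> R" using iX less.prems(2) by (auto simp: XR'_def)
        hence "cell n R i cn" using cn(2) ir by (auto simp: cell_iff)
        moreover have "\<not> T i cn" using EW_rect[OF T ir c(2) Trc(2) cn(2) \<open>cell n R i cn\<close> c(3) Trc(1) cn(3)] .
        moreover have "cn \<in> XC'"
        proof -
          obtain i3 where i3: "i3 \<in> XR" "cell n R i3 cn" "T i3 cn" using less.prems(4) cn(1) by blast
          have "i3 \<noteq> r" using i3 cn(3) by auto
          hence "i3 \<in> XR'" using i3 by (simp add: XR'_def)
          thus ?thesis using i3 cn(1) unfolding XC'_def by blast
        qed
        ultimately show ?thesis by blast
      qed
    qed
    have h4: "\<forall>j\<in>XC'. \<exists>i\<in>XR'. cell n R i j \<and> T i j" unfolding XC'_def by blast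
    have lt: "card XR' < card XR" unfolding XR'_def by (rule card_Diff1_less[OF less.prems(1) rX])
    have fin: "finite XR'" using less.prems(1) by (simp add: XR'_def)
    have sub: "XR' \<subseteq> R" using less.prems(2) by (auto simp: XR'_def)
    have "XR' = {}" by (rule less.hyps[OF lt fin sub h3 h4])
    hence "XR = {r}" using rX by (auto simp: XR'_def)
    obtain i3 where "i3 \<in> XR" "cell n R i3 cn" "T i3 cn" using less.prems(4) cn(1) by blast
    thus False using \<open>XR = {r}\<close> cn(3) by auto
  qed
qed

end


context fer begin

lemma lev_eq_st: assumes "stable n R c" "v \<in> blk c k" shows "lev c v = k"
  unfolding lev_def canon_index_def
proof (rule Least_equality)
  show "v \<in> canon_block n R c k" using assms(2) by (simp add: blk_def)
  fix y assume "v \<in> canon_block n R c y"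
  hence "y = k" using blk_unique[OF assms(1)] assms(2) by (simp add: blk_def)
  thus "k \<le> y" by simp
qed

lemma Top_lev_le: assumes "stable n R c" "v \<in> Top c k" shows "lev c v \<le> k"
proof -
  obtain i where "i \<le> k" "v \<in> blk c i" using assms(2) by (auto simp: Top_def)
  thus ?thesis using lev_eq_st[OF assms(1)] by simp
qed

definition Qinv :: "tableau \<Rightarrow> nat \<Rightarrow> bool" where
  "Qinv T k \<longleftrightarrow> (\<forall>i j. cell n R i j \<longrightarrow>
     ((j \<in> Top (phi_TC n R T) k \<and> i \<notin> Top (phi_TC n R T) k \<longrightarrow> \<not> T i j) \<and>
      (i \<in> Top (phi_TC n R T) k \<and> j \<notin> Top (phi_TC n R T) k \<longrightarrow> T i j) \<and>
      (i \<in> Top (phi_TC n R T) k \<and> j \<in> Top (phi_TC n R T) k \<longrightarrow>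
         (T i j \<longleftrightarrow> lev (phi_TC n R T) i < lev (phi_TC n R T) j))))"

lemma EW_stable:
  assumes T: "T \<in> EWtab n R"
  shows "stable n R (phi_TC n R T)"
  unfolding stable_def
proof
  fix v assume v1: "v \<in> {1..n}"
  show "phi_TC n R T v < deg n R v"
  proof (cases "v \<in> R")
    case True
    have "v \<in> R - {0}" using True v1 by auto
    moreover have "\<forall>i\<in>R - {0}. \<exists>j. cell n R i j \<and> \<not> T i j" using T unfolding EWtab_def by blast
    ultimately obtain j where j: "cell n R v j" "\<not> T v j" by blast
    have "{j. cell n R v j \<and> T v j} \<subset> {j. cell n R v j}" using j by auto
    hence "card {j. cell n R v j \<and> T v j} < card {j. cell n R v j}"
      by (rule psubset_card_mono[rotated]) (rule finite_cell_row[of v "\<lambda>_. True", simplified])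
    thus ?thesis using True v1 by (simp add: phi_TC_def row_ones_def deg_nb nb_row)
  next
    case False
    have c0: "cell n R 0 v" using False v1 R0 by (simp add: cell_iff)
    hence "T 0 v" using T unfolding EWtab_def by blast
    hence "{i. cell n R i v \<and> \<not> T i v} \<subset> {i. cell n R i v}" using c0 by auto
    hence "card {i. cell n R i v \<and> \<not> T i v} < card {i. cell n R i v}"
      by (rule psubset_card_mono[rotated]) (rule finite_cell_col[of v "\<lambda>_. True", simplified])
    thus ?thesis using False v1 by (simp add: phi_TC_def col_zeros_def deg_nb nb_col)
  qed
qed

lemma card_sub_eq:
  assumes "finite B" "A \<subseteq> B" "card B \<le> card A" shows "A = B"
  using assms card_seteq by blast

lemma EW_col_step:
  assumes T: "T \<in> EWtab n R" and Q: "Qinv T k"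
    and j1: "j \<in> {1..n}" "j \<notin> R" and jT: "j \<notin> Top (phi_TC n R T) k"
  shows "int (deg n R j) \<le> X (phi_TC n R T) k j \<longleftrightarrow>
         {i\<in>Top (phi_TC n R T) k. cell n R i j} = {i. cell n R i j \<and> T i j}"
proof -
  let ?c = "phi_TC n R T"
  have st: "stable n R ?c" by (rule EW_stable[OF T])
  have e1: "{w\<in>Top ?c k. adj n R j w} = {i\<in>Top ?c k. cell n R i j}" using j1 by (auto simp: adj_col)
  have X: "X ?c k j = int (col_zeros n R T j) + int (card {i\<in>Top ?c k. cell n R i j})"
    using X_formula[OF st j1(1), of k] jT e1 j1 by (simp add: phi_TC_def)
  have sub: "{i\<in>Top ?c k. cell n R i j} \<subseteq> {i. cell n R i j \<and> T i j}"
    using Q jT unfolding Qinv_def by blast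
  have d: "deg n R j = col_zeros n R T j + card {i. cell n R i j \<and> T i j}"
  proof -
    have f: "finite {i. cell n R i j}" using finite_cell_col[of j "\<lambda>_. True"] by simp
    have "card {i. cell n R i j} = card {x\<in>{i. cell n R i j}. \<not> T x j} + card {x\<in>{i. cell n R i j}. \<not> \<not> T x j}"
      by (rule card_split[OF f])
    moreover have "{x\<in>{i. cell n R i j}. \<not> T x j} = {i. cell n R i j \<and> \<not> T i j}" by auto
    moreover have "{x\<in>{i. cell n R i j}. \<not> \<not> T x j} = {i. cell n R i j \<and> T i j}" by auto
    ultimately show ?thesis unfolding deg_nb nb_col[OF j1(2)] col_zeros_def by simp
  qed
  have fin: "finite {i. cell n R i j \<and> T i j}" by simp
  show ?thesis
  proof
    assume "int (deg n R j) \<le> X ?c k j"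
    hence "card {i. cell n R i j \<and> T i j} \<le> card {i\<in>Top ?c k. cell n R i j}" using X d by simp
    thus "{i\<in>Top ?c k. cell n R i j} = {i. cell n R i j \<and> T i j}" using card_sub_eq[OF fin sub] by blast
  next
    assume "{i\<in>Top ?c k. cell n R i j} = {i. cell n R i j \<and> T i j}"
    thus "int (deg n R j) \<le> X ?c k j" using X d by simp
  qed
qed

lemma EW_row_step:
  assumes T: "T \<in> EWtab n R" and Q: "Qinv T k"
    and i1: "i \<in> {1..n}" "i \<in> R" and iT: "i \<notin> Top (phi_TC n R T) k"
  shows "int (deg n R i) \<le> X (phi_TC n R T) k i \<longleftrightarrow>
         {j\<in>Top (phi_TC n R T) k. cell n R i j} = {j. cell n R i j \<and> \<not> T i j}"
proof -
  let ?c = "phi_TC n R T"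
  have st: "stable n R ?c" by (rule EW_stable[OF T])
  have e1: "{w\<in>Top ?c k. adj n R i w} = {j\<in>Top ?c k. cell n R i j}" using i1 by (auto simp: adj_row)
  have X: "X ?c k i = int (row_ones n R T i) + int (card {j\<in>Top ?c k. cell n R i j})"
    using X_formula[OF st i1(1), of k] iT e1 i1 by (simp add: phi_TC_def)
  have sub: "{j\<in>Top ?c k. cell n R i j} \<subseteq> {j. cell n R i j \<and> \<not> T i j}"
    using Q iT unfolding Qinv_def by blast
  have d: "deg n R i = row_ones n R T i + card {j. cell n R i j \<and> \<not> T i j}"
  proof -
    have f: "finite {j. cell n R i j}" using finite_cell_row[of i "\<lambda>_. True"] by simp
    have "card {j. cell n R i j} = card {x\<in>{j. cell n R i j}. T i x} + card {x\<in>{j. cell n R i j}. \<not> T i x}"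
      by (rule card_split[OF f])
    moreover have "{x\<in>{j. cell n R i j}. T i x} = {j. cell n R i j \<and> T i j}" by auto
    moreover have "{x\<in>{j. cell n R i j}. \<not> T i x} = {j. cell n R i j \<and> \<not> T i j}" by auto
    ultimately show ?thesis unfolding deg_nb nb_row[OF i1(2)] row_ones_def by simp
  qed
  have fin: "finite {j. cell n R i j \<and> \<not> T i j}" by simp
  show ?thesis
  proof
    assume "int (deg n R i) \<le> X ?c k i"
    hence "card {j. cell n R i j \<and> \<not> T i j} \<le> card {j\<in>Top ?c k. cell n R i j}" using X d by simp
    thus "{j\<in>Top ?c k. cell n R i j} = {j. cell n R i j \<and> \<not> T i j}" using card_sub_eq[OF fin sub] by blast
  next
    assume "{j\<in>Top ?c k. cell n R i j} = {j. cell n R i j \<and> \<not> T i j}"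
    thus "int (deg n R i) \<le> X ?c k i" using X d by simp
  qed
qed

end


context fer begin

lemma Q1: "Qinv T k \<Longrightarrow> cell n R i j \<Longrightarrow> j \<in> Top (phi_TC n R T) k \<Longrightarrow> i \<notin> Top (phi_TC n R T) k \<Longrightarrow> \<not> T i j"
  unfolding Qinv_def by blast
lemma Q2: "Qinv T k \<Longrightarrow> cell n R i j \<Longrightarrow> i \<in> Top (phi_TC n R T) k \<Longrightarrow> j \<notin> Top (phi_TC n R T) k \<Longrightarrow> T i j"
  unfolding Qinv_def by blast
lemma Q3: "Qinv T k \<Longrightarrow> cell n R i j \<Longrightarrow> i \<in> Top (phi_TC n R T) k \<Longrightarrow> j \<in> Top (phi_TC n R T) k \<Longrightarrow> T i j = (lev (phi_TC n R T) i < lev (phi_TC n R T) j)"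
  unfolding Qinv_def by blast

lemma Qinv_all:
  assumes T: "T \<in> EWtab n R"
  shows "Qinv T k"
proof (induction k)
  let ?c = "phi_TC n R T"
  case 0
  show ?case unfolding Qinv_def Top_0
  proof (intro allI impI conjI)
    fix i j assume c: "cell n R i j"
    hence "j \<noteq> 0" using R0 by (auto simp: cell_iff)
    thus "j \<in> {0} \<and> i \<notin> {0} \<Longrightarrow> \<not> T i j" by simp
    show "i \<in> {0} \<and> j \<notin> {0} \<Longrightarrow> T i j" using T c unfolding EWtab_def by auto
    show "i \<in> {0} \<and> j \<in> {0} \<Longrightarrow> T i j = (lev ?c i < lev ?c j)" using \<open>j \<noteq> 0\<close> by simp
  qed
next
  let ?c = "phi_TC n R T"
  case (Suc k)
  have st: "stable n R ?c" by (rule EW_stable[OF T])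
  define B where "B = blk ?c (Suc k)"
  have TS: "Top ?c (Suc k) = Top ?c k \<union> B" by (simp add: Top_Suc B_def)
  have disj: "\<And>v. v \<in> B \<Longrightarrow> v \<notin> Top ?c k"
  proof
    fix v assume "v \<in> B" "v \<in> Top ?c k"
    then obtain i where "i \<le> k" "v \<in> blk ?c i" "v \<in> blk ?c (Suc k)" by (auto simp: Top_def B_def)
    thus False using blk_unique[OF st, of v i "Suc k"] by simp
  qed
  have levB: "\<And>v. v \<in> B \<Longrightarrow> lev ?c v = Suc k" using lev_eq_st[OF st] by (simp add: B_def)
  have levT: "\<And>v. v \<in> Top ?c k \<Longrightarrow> lev ?c v \<le> k" using Top_lev_le[OF st] by blast
  have IH: "\<And>i j. cell n R i j \<Longrightarrow>
     ((j \<in> Top ?c k \<and> i \<notin> Top ?c k \<longrightarrow> \<not> T i j) \<and>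
      (i \<in> Top ?c k \<and> j \<notin> Top ?c k \<longrightarrow> T i j) \<and>
      (i \<in> Top ?c k \<and> j \<in> Top ?c k \<longrightarrow> (T i j \<longleftrightarrow> lev ?c i < lev ?c j)))"
    using Suc unfolding Qinv_def by blast
  show ?case unfolding Qinv_def
  proof (intro allI impI)
    fix i j assume c: "cell n R i j"
    have iR: "i \<in> R" and jR: "j \<notin> R" and jn: "j \<le> n" and ij: "i < j" using c by (auto simp: cell_iff)
    have j1: "j \<in> {1..n}" using ij jn by auto
    show "(j \<in> Top ?c (Suc k) \<and> i \<notin> Top ?c (Suc k) \<longrightarrow> \<not> T i j) \<and>
      (i \<in> Top ?c (Suc k) \<and> j \<notin> Top ?c (Suc k) \<longrightarrow> T i j) \<and>
      (i \<in> Top ?c (Suc k) \<and> j \<in> Top ?c (Suc k) \<longrightarrow> (T i j \<longleftrightarrow> lev ?c i < lev ?c j))"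
    proof (cases "odd (Suc k)")
      case True
      have iB: "i \<notin> B" using blk_Suc_type[of i ?c k] iR True by (auto simp: B_def)
      show ?thesis
      proof (cases "j \<in> B")
        case False
        thus ?thesis using IH[OF c] TS iB by auto
      next
        case jB: True
        have jT: "j \<notin> Top ?c k" using disj jB by blast
        have "int (deg n R j) \<le> X ?c k j" using jB unfolding B_def blk_Suc by auto
        hence eq: "{i'\<in>Top ?c k. cell n R i' j} = {i'. cell n R i' j \<and> T i' j}"
          using EW_col_step[OF T Suc j1 jR jT] by blast
        have "i \<notin> Top ?c k \<Longrightarrow> \<not> T i j" using eq c by blast
        moreover have "i \<in> Top ?c k \<Longrightarrow> T i j" using eq c by blast
        moreover have "i \<in> Top ?c k \<Longrightarrow> lev ?c i < lev ?c j" using levT[of i] levB[OF jB] by simp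
        ultimately show ?thesis using TS iB jB by auto
      qed
    next
      case False
      have jB: "j \<notin> B" using blk_Suc_type[of j ?c k] jR False by (auto simp: B_def)
      show ?thesis
      proof (cases "i \<in> B")
        case False
        thus ?thesis using IH[OF c] TS jB by auto
      next
        case iB: True
        have i1: "i \<in> {1..n}" using iB blk_Suc_type by (auto simp: B_def)
        have iT: "i \<notin> Top ?c k" using disj iB by blast
        have "int (deg n R i) \<le> X ?c k i" using iB unfolding B_def blk_Suc by auto
        hence eq: "{j'\<in>Top ?c k. cell n R i j'} = {j'. cell n R i j' \<and> \<not> T i j'}"
          using EW_row_step[OF T Suc i1 iR iT] by blast
        have "j \<notin> Top ?c k \<Longrightarrow> T i j" using eq c by blast
        moreover have "j \<in> Top ?c k \<Longrightarrow> \<not> T i j" using eq c by blast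
        moreover have "j \<in> Top ?c k \<Longrightarrow> \<not> lev ?c i < lev ?c j" using levT[of j] levB[OF iB] by simp
        ultimately show ?thesis using TS iB jB by auto
      qed
    qed
  qed
qed

lemma EW_alltop:
  assumes T: "T \<in> EWtab n R"
  shows "alltop (phi_TC n R T)"
proof -
  let ?c = "phi_TC n R T"
  have st: "stable n R ?c" by (rule EW_stable[OF T])
  obtain K where K: "TopI ?c = Top ?c K" using TopI_eq_Top by blast
  have Q: "Qinv T K" by (rule Qinv_all[OF T])
  define XR where "XR = {i\<in>R. i \<notin> TopI ?c}"
  define XC where "XC = {j\<in>cols n R. j \<notin> TopI ?c}"
  have "XR \<subseteq> {0..n}" using Rsub by (auto simp: XR_def)
  hence finXR: "finite XR" using finite_subset by blast
  have h3: "\<forall>i\<in>XR. \<exists>j\<in>XC. cell n R i j \<and> \<not> T i j"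
  proof
    fix i assume "i \<in> XR"
    hence iR: "i \<in> R" and iT: "i \<notin> TopI ?c" by (auto simp: XR_def)
    have "i \<noteq> 0"
    proof
      assume "i = 0" thus False using iT zero_TopI[of ?c] by simp
    qed
    hence i1: "i \<in> {1..n}" using iR Rsub by auto
    have lim: "?c i + card {w\<in>TopI ?c. adj n R i w} < deg n R i" by (rule limit[OF st i1 iT])
    have e1: "{w\<in>TopI ?c. adj n R i w} = {j\<in>TopI ?c. cell n R i j}" using iR by (auto simp: adj_row)
    have d: "deg n R i = row_ones n R T i + card {j. cell n R i j \<and> \<not> T i j}"
    proof -
      have f: "finite {j. cell n R i j}" using finite_cell_row[of i "\<lambda>_. True"] by simp
      have "card {j. cell n R i j} = card {x\<in>{j. cell n R i j}. T i x} + card {x\<in>{j. cell n R i j}. \<not> T i x}"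
        by (rule card_split[OF f])
      moreover have "{x\<in>{j. cell n R i j}. T i x} = {j. cell n R i j \<and> T i j}" by auto
      moreover have "{x\<in>{j. cell n R i j}. \<not> T i x} = {j. cell n R i j \<and> \<not> T i j}" by auto
      ultimately show ?thesis unfolding deg_nb nb_row[OF iR] row_ones_def by simp
    qed
    have ci: "?c i = row_ones n R T i" using i1 iR by (simp add: phi_TC_def)
    have lt: "card {j\<in>TopI ?c. cell n R i j} < card {j. cell n R i j \<and> \<not> T i j}"
      using lim e1 d ci by simp
    have sub: "{j\<in>TopI ?c. cell n R i j} \<subseteq> {j. cell n R i j \<and> \<not> T i j}"
    proof
      fix j assume "j \<in> {j\<in>TopI ?c. cell n R i j}"
      hence "j \<in> Top ?c K" "cell n R i j" using K by auto
      thus "j \<in> {j. cell n R i j \<and> \<not> T i j}" using Q1[OF Q, of i j] iT K by simp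
    qed
    have "\<not> {j. cell n R i j \<and> \<not> T i j} \<subseteq> {j\<in>TopI ?c. cell n R i j}"
    proof
      assume "{j. cell n R i j \<and> \<not> T i j} \<subseteq> {j\<in>TopI ?c. cell n R i j}"
      hence "card {j. cell n R i j \<and> \<not> T i j} \<le> card {j\<in>TopI ?c. cell n R i j}"
        by (intro card_mono) simp_all
      thus False using lt by simp
    qed
    then obtain j where j: "cell n R i j" "\<not> T i j" "j \<notin> TopI ?c" by blast
    have "j \<in> XC" using j by (auto simp: XC_def cols_iff cell_iff)
    thus "\<exists>j\<in>XC. cell n R i j \<and> \<not> T i j" using j by blast
  qed
  have h4: "\<forall>j\<in>XC. \<exists>i\<in>XR. cell n R i j \<and> T i j"
  proof
    fix j assume "j \<in> XC"
    hence jR: "j \<notin> R" and jn: "j \<le> n" and jT: "j \<notin> TopI ?c" by (auto simp: XC_def cols_iff)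
    have "j \<noteq> 0"
    proof
      assume "j = 0" thus False using jR R0 by simp
    qed
    hence j1: "j \<in> {1..n}" using jn by auto
    have lim: "?c j + card {w\<in>TopI ?c. adj n R j w} < deg n R j" by (rule limit[OF st j1 jT])
    have e1: "{w\<in>TopI ?c. adj n R j w} = {i\<in>TopI ?c. cell n R i j}" using jR by (auto simp: adj_col)
    have d: "deg n R j = col_zeros n R T j + card {i. cell n R i j \<and> T i j}"
    proof -
      have f: "finite {i. cell n R i j}" using finite_cell_col[of j "\<lambda>_. True"] by simp
      have "card {i. cell n R i j} = card {x\<in>{i. cell n R i j}. \<not> T x j} + card {x\<in>{i. cell n R i j}. \<not> \<not> T x j}"
        by (rule card_split[OF f])
      moreover have "{x\<in>{i. cell n R i j}. \<not> T x j} = {i. cell n R i j \<and> \<not> T i j}" by auto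
      moreover have "{x\<in>{i. cell n R i j}. \<not> \<not> T x j} = {i. cell n R i j \<and> T i j}" by auto
      ultimately show ?thesis unfolding deg_nb nb_col[OF jR] col_zeros_def by simp
    qed
    have cj: "?c j = col_zeros n R T j" using j1 jR by (simp add: phi_TC_def)
    have lt: "card {i\<in>TopI ?c. cell n R i j} < card {i. cell n R i j \<and> T i j}"
      using lim e1 d cj by simp
    have sub: "{i\<in>TopI ?c. cell n R i j} \<subseteq> {i. cell n R i j \<and> T i j}"
    proof
      fix i assume "i \<in> {i\<in>TopI ?c. cell n R i j}"
      hence "i \<in> Top ?c K" "cell n R i j" using K by auto
      thus "i \<in> {i. cell n R i j \<and> T i j}" using Q2[OF Q, of i j] jT K by simp
    qed
    have "\<not> {i. cell n R i j \<and> T i j} \<subseteq> {i\<in>TopI ?c. cell n R i j}"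
    proof
      assume "{i. cell n R i j \<and> T i j} \<subseteq> {i\<in>TopI ?c. cell n R i j}"
      hence "card {i. cell n R i j \<and> T i j} \<le> card {i\<in>TopI ?c. cell n R i j}"
        by (intro card_mono) simp_all
      thus False using lt by simp
    qed
    then obtain i where i: "cell n R i j" "T i j" "i \<notin> TopI ?c" by blast
    have "i \<in> XR" using i by (auto simp: XR_def cell_iff)
    thus "\<exists>i\<in>XR. cell n R i j \<and> T i j" using i by blast
  qed
  have "XR = {}" by (rule comb[OF T finXR _ h3 h4]) (auto simp: XR_def)
  hence "XC = {}" using h4 by blast
  have "{0..n} \<subseteq> TopI ?c"
  proof
    fix v assume v: "v \<in> {0..n}"
    show "v \<in> TopI ?c"
    proof (cases "v \<in> R")
      case True thus ?thesis using \<open>XR = {}\<close> by (auto simp: XR_def)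
    next
      case False thus ?thesis using \<open>XC = {}\<close> v by (auto simp: XC_def cols_iff)
    qed
  qed
  hence "TopI ?c = {0..n}" using TopI_sub by blast
  thus ?thesis using st by (simp add: alltop_def)
qed

lemma EW_eq_S:
  assumes T: "T \<in> EWtab n R"
  shows "T = Sl (lev (phi_TC n R T))"
proof -
  let ?c = "phi_TC n R T"
  have at: "alltop ?c" by (rule EW_alltop[OF T])
  obtain K where K: "TopI ?c = Top ?c K" using TopI_eq_Top by blast
  have Q: "Qinv T K" by (rule Qinv_all[OF T])
  show ?thesis
  proof (rule ext, rule ext)
    fix i j
    show "T i j = Sl (lev ?c) i j"
    proof (cases "cell n R i j")
      case False
      have "\<forall>i j. T i j \<longrightarrow> cell n R i j" using T unfolding EWtab_def by blast
      thus ?thesis using False unfolding Sl_def by blast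
    next
      case True
      have "i \<in> TopI ?c" "j \<in> TopI ?c" using at True by (auto simp: alltop_def cell_iff)
      thus ?thesis using Q3[OF Q True] K unfolding Sl_def using True by simp
    qed
  qed
qed

lemma EW_unique:
  assumes "T1 \<in> EWtab n R" "T2 \<in> EWtab n R" "phi_TC n R T1 = phi_TC n R T2"
  shows "T1 = T2"
  using EW_eq_S[OF assms(1)] EW_eq_S[OF assms(2)] assms(3) by simp

end


context fer begin

lemma par_gap1: "(a::nat) < b \<Longrightarrow> Suc a \<noteq> b \<Longrightarrow> odd a \<Longrightarrow> even b \<Longrightarrow> a + 3 \<le> b" by presburger
lemma par_gap2: "(a::nat) < b \<Longrightarrow> Suc a \<noteq> b \<Longrightarrow> even a \<Longrightarrow> odd b \<Longrightarrow> a + 3 \<le> b" by presburger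
lemma par_contra: "(k::nat) \<le> j' \<Longrightarrow> j' < k' \<Longrightarrow> k' \<le> Suc k \<Longrightarrow> odd k \<Longrightarrow> even j' \<Longrightarrow> False" by presburger

lemma chain_levels:
  assumes va: "valid l" and pp: "\<forall>v\<in>{1..n}. 0 < prv l v"
  shows "\<forall>v. v \<le> n \<longrightarrow> l v = L \<longrightarrow> (\<forall>m\<le>L. \<exists>u\<le>n. l u = m)"
proof (induction L)
  case 0 thus ?case by auto
next
  case (Suc L)
  show ?case
  proof (intro allI impI)
    fix v m assume v: "v \<le> n" "l v = Suc L" and m: "m \<le> Suc L"
    show "\<exists>u\<le>n. l u = m"
    proof (cases "m = Suc L")
      case True thus ?thesis using v by blast
    next
      case False
      have "v \<noteq> 0"
      proof
        assume "v = 0" hence "l v = 0" using va by (simp add: valid_def)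
        thus False using v by simp
      qed
      hence "v \<in> {1..n}" using v by auto
      hence "0 < prv l v" using pp by blast
      hence "{u\<in>{0..n}. adj n R v u \<and> Suc (l u) = l v} \<noteq> {}" unfolding prv_def by (simp only: card_gt_0_iff) simp
      then obtain u where u: "u \<le> n" "Suc (l u) = l v" by auto
      have "l u = L" using u v by simp
      thus ?thesis using Suc.IH u False m by auto
    qed
  qed
qed

lemma level_exists:
  assumes va: "valid l" and pp: "\<forall>v\<in>{1..n}. 0 < prv l v" and v: "v \<le> n" "m \<le> l v"
  shows "\<exists>u\<le>n. l u = m"
  using chain_levels[OF va pp, of "l v"] v by blast

lemma nu_prv:
  assumes T: "T \<in> EWtab n R" and j1: "j \<in> {1..n}"
  shows "nu n R T j = prv (lev (phi_TC n R T)) j"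
proof -
  let ?c = "phi_TC n R T"
  let ?l = "lev ?c"
  have at: "alltop ?c" by (rule EW_alltop[OF T])
  have g: "good ?l ?c" by (rule good_lev[OF at])
  have va: "valid ?l" using g by (simp add: good_def)
  have pp: "\<forall>v\<in>{1..n}. 0 < prv ?l v" using good_prv[OF g] by blast
  have TS: "T = Sl ?l" by (rule EW_eq_S[OF T])
  have Tiff: "\<And>i k. T i k = (cell n R i k \<and> ?l i < ?l k)"
  proof -
    fix i k
    have "T i k = Sl ?l i k" using TS by (rule fun_cong[OF fun_cong])
    thus "T i k = (cell n R i k \<and> ?l i < ?l k)" by (simp only: Sl_def)
  qed
  have supp_iff: "\<And>i k. supp n R T i k \<longleftrightarrow> ?l i < ?l k" by (simp add: supp_def lev_def)
  have jn: "j \<le> n" using j1 by simp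
  show ?thesis
  proof (cases "j \<in> R")
    case True
    have "{k. cell n R j k \<and> \<not> T j k \<and> \<not> cornersupport n R T j k} = {u\<in>{0..n}. adj n R j u \<and> Suc (?l u) = ?l j}"
    proof (rule set_eqI, rule iffI)
      fix k assume "k \<in> {k. cell n R j k \<and> \<not> T j k \<and> \<not> cornersupport n R T j k}"
      hence c: "cell n R j k" and nT: "\<not> T j k" and ncs: "\<not> cornersupport n R T j k" by auto
      have a: "adj n R j k" using c True by (simp add: adj_row)
      have kn: "k \<le> n" and kR: "k \<notin> R" using c by (auto simp: cell_iff)
      have lt: "?l k < ?l j" using nT c valid_adj_ne[OF va a] Tiff by auto
      have pk: "odd (?l k)" using valid_par[OF va kn] kR by simp
      have pj: "even (?l j)" using valid_par[OF va jn] True by simp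
      have "Suc (?l k) = ?l j"
      proof (rule ccontr)
        assume "Suc (?l k) \<noteq> ?l j"
        hence ge: "?l k + 3 \<le> ?l j" using par_gap1[OF lt _ pk pj] by blast
        obtain u1 where u1: "u1 \<le> n" "?l u1 = ?l k + 1" using level_exists[OF va pp jn, of "?l k + 1"] ge by auto
        obtain u2 where u2: "u2 \<le> n" "?l u2 = ?l k + 2" using level_exists[OF va pp jn, of "?l k + 2"] ge by auto
        have u1R: "u1 \<in> R" using valid_par[OF va u1(1)] u1(2) pk by simp
        have u2C: "u2 \<in> cols n R" using valid_par[OF va u2(1)] u2 pk by (simp add: cols_iff)
        have "cornersupport n R T j k"
          unfolding cornersupport_def
          apply (rule bexI[of _ u1], rule bexI[of _ u2])
          using u1 u2 ge nT u1R u2C by (auto simp: supp_iff)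
        thus False using ncs by simp
      qed
      thus "k \<in> {u\<in>{0..n}. adj n R j u \<and> Suc (?l u) = ?l j}" using a kn by simp
    next
      fix k assume "k \<in> {u\<in>{0..n}. adj n R j u \<and> Suc (?l u) = ?l j}"
      hence a: "adj n R j k" and kn: "k \<le> n" and e: "Suc (?l k) = ?l j" by auto
      have c: "cell n R j k" using a True by (simp add: adj_row)
      have nT: "\<not> T j k" using e Tiff by simp
      have pk: "odd (?l k)" using valid_par[OF va kn] c by (simp add: cell_iff)
      have ncs: "\<not> cornersupport n R T j k"
      proof
        assume "cornersupport n R T j k"
        then obtain j' k' where j': "j' \<in> R" "k' \<in> cols n R"
          and s: "supp n R T j' k' \<noteq> T j k" "supp n R T j' k = T j k" "supp n R T j k' = T j k"
          unfolding cornersupport_def by blast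
        have h: "?l j' < ?l k'" "\<not> ?l j' < ?l k" "\<not> ?l j < ?l k'" using s nT supp_iff by auto
        have "j' \<le> n" using j' Rsub by auto
        hence "even (?l j')" using valid_par[OF va] j' by blast
        moreover have "?l k \<le> ?l j'" "?l k' \<le> Suc (?l k)" using h e by linarith+
        ultimately show False using par_contra[of "?l k" "?l j'" "?l k'"] h pk by blast
      qed
      show "k \<in> {k. cell n R j k \<and> \<not> T j k \<and> \<not> cornersupport n R T j k}" using c nT ncs by simp
    qed
    thus ?thesis using True by (simp add: nu_def prv_def)
  next
    case False
    have "{i. cell n R i j \<and> T i j \<and> \<not> cornersupport n R T i j} = {u\<in>{0..n}. adj n R j u \<and> Suc (?l u) = ?l j}"
    proof (rule set_eqI, rule iffI)
      fix i assume "i \<in> {i. cell n R i j \<and> T i j \<and> \<not> cornersupport n R T i j}"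
      hence c: "cell n R i j" and tT: "T i j" and ncs: "\<not> cornersupport n R T i j" by auto
      have a: "adj n R j i" using c False by (simp add: adj_col)
      have iR: "i \<in> R" using c by (simp add: cell_iff)
      have iN: "i \<le> n" using iR Rsub by auto
      have lt: "?l i < ?l j" using tT Tiff by simp
      have pi: "even (?l i)" using valid_par[OF va iN] iR by simp
      have pj: "odd (?l j)" using valid_par[OF va jn] False by simp
      have "Suc (?l i) = ?l j"
      proof (rule ccontr)
        assume "Suc (?l i) \<noteq> ?l j"
        hence ge: "?l i + 3 \<le> ?l j" using par_gap2[OF lt _ pi pj] by blast
        obtain u1 where u1: "u1 \<le> n" "?l u1 = ?l i + 1" using level_exists[OF va pp jn, of "?l i + 1"] ge by auto
        obtain u2 where u2: "u2 \<le> n" "?l u2 = ?l i + 2" using level_exists[OF va pp jn, of "?l i + 2"] ge by auto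
        have u1C: "u1 \<in> cols n R" using valid_par[OF va u1(1)] u1 pi by (simp add: cols_iff)
        have u2R: "u2 \<in> R" using valid_par[OF va u2(1)] u2(2) pi by simp
        have "cornersupport n R T i j"
          unfolding cornersupport_def
          apply (rule bexI[of _ u2], rule bexI[of _ u1])
          using u1 u2 ge tT u1C u2R by (auto simp: supp_iff)
        thus False using ncs by simp
      qed
      thus "i \<in> {u\<in>{0..n}. adj n R j u \<and> Suc (?l u) = ?l j}" using a iN by simp
    next
      fix i assume "i \<in> {u\<in>{0..n}. adj n R j u \<and> Suc (?l u) = ?l j}"
      hence a: "adj n R j i" and iN: "i \<le> n" and e: "Suc (?l i) = ?l j" by auto
      have c: "cell n R i j" using a False by (simp add: adj_col)
      have tT: "T i j" using e c Tiff by simp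
      have ncs: "\<not> cornersupport n R T i j"
      proof
        assume "cornersupport n R T i j"
        then obtain j' k' where j': "j' \<in> R" "k' \<in> cols n R"
          and s: "supp n R T j' k' \<noteq> T i j" "supp n R T j' j = T i j" "supp n R T i k' = T i j"
          unfolding cornersupport_def by blast
        have h: "\<not> ?l j' < ?l k'" "?l j' < ?l j" "?l i < ?l k'" using s tT supp_iff by auto
        thus False using e by linarith
      qed
      show "i \<in> {i. cell n R i j \<and> T i j \<and> \<not> cornersupport n R T i j}" using c tT ncs by simp
    qed
    thus ?thesis using False by (simp add: nu_def prv_def)
  qed
qed

lemma prv_cong: "(\<And>v. v \<le> n \<Longrightarrow> l v = l' v) \<Longrightarrow> j \<le> n \<Longrightarrow> prv l j = prv l' j"
  unfolding prv_def by (intro arg_cong[where f = card]) auto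

end


context fer begin

lemma minrec_form:
  assumes va: "valid l" and bl: "\<And>k. blk c k = {v\<in>{0..n}. l v = k}"
  shows "minrec n R c = (\<lambda>j. if j \<in> {1..n} then after l j else 0)"
proof (rule ext)
  fix j show "minrec n R c j = (if j \<in> {1..n} then after l j else 0)"
    using minrec_after[OF va bl] by (cases "j \<in> {1..n}") (auto simp: minrec_def)
qed

lemma phi_CT_eq:
  assumes "T \<in> EWtab n R" "phi_TC n R T = m"
  shows "phi_CT n R m = T"
  unfolding phi_CT_def
proof (rule the_equality)
  show "T \<in> EWtab n R \<and> phi_TC n R T = m" using assms by simp
  fix T' assume "T' \<in> EWtab n R \<and> phi_TC n R T' = m"
  thus "T' = T" using EW_unique assms by metis
qed

lemma main:
  assumes D: "(T, a) \<in> DecEWtab n R"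
  shows "(T, a) \<in> Rec_EW n R \<longleftrightarrow> (\<forall>j\<in>{1..n}. a j < nu n R T j)"
proof -
  have T: "T \<in> EWtab n R" using D by (simp add: DecEWtab_def)
  have a0: "\<And>i. i \<notin> {1..n} \<Longrightarrow> a i = 0" using D by (simp add: DecEWtab_def)
  let ?c = "phi_TC n R T"
  let ?l = "lev ?c"
  have at: "alltop ?c" by (rule EW_alltop[OF T])
  have g: "good ?l ?c" by (rule good_lev[OF at])
  have va: "valid ?l" using g by (simp add: good_def)
  have pp: "\<forall>v\<in>{1..n}. 0 < prv ?l v" using good_prv[OF g] by blast
  have TS: "T = Sl ?l" by (rule EW_eq_S[OF T])
  have cform: "?c = (\<lambda>i. if i \<in> {1..n} then after ?l i else 0)"
    using S_phi[OF va] TS by metis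
  have cv: "\<And>v. v \<in> {1..n} \<Longrightarrow> ?c v = after ?l v"
  proof -
    fix v assume v1: "v \<in> {1..n}"
    have "?c v = (\<lambda>i. if i \<in> {1..n} then after ?l i else 0) v" using cform by (rule fun_cong)
    thus "?c v = after ?l v" using v1 by simp
  qed
  have nuf: "\<And>j. j \<in> {1..n} \<Longrightarrow> nu n R T j = prv ?l j" using nu_prv[OF T] by blast
  show ?thesis
  proof
    assume "(T, a) \<in> Rec_EW n R"
    then obtain x where xr: "recurrent n R x" and px: "psi n R x = (T, a)"
      by (auto simp: Rec_EW_def Rec_def)
    have stx: "stable n R x" "TopI x = {0..n}" using recurrent_all[OF xr] by auto
    have atx: "alltop x" using stx by (simp add: alltop_def)
    let ?lx = "lev x"
    have gx: "good ?lx x" by (rule good_lev[OF atx])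
    have vax: "valid ?lx" using gx by (simp add: good_def)
    have ppx: "\<forall>v\<in>{1..n}. 0 < prv ?lx v" using good_prv[OF gx] by blast
    define m where "m = minrec n R x"
    have mf: "m = (\<lambda>j. if j \<in> {1..n} then after ?lx j else 0)"
      unfolding m_def by (rule minrec_form[OF vax blk_lev[OF atx]])
    have SE: "Sl ?lx \<in> EWtab n R" by (rule S_EW[OF vax ppx])
    have Sphi: "phi_TC n R (Sl ?lx) = m" using S_phi[OF vax] mf by simp
    have "T = phi_CT n R m" using px by (simp add: psi_def m_def)
    also have "\<dots> = Sl ?lx" by (rule phi_CT_eq[OF SE Sphi])
    finally have TSx: "T = Sl ?lx" .
    have cm: "?c = m" using TSx Sphi by simp
    have gcm: "good ?lx ?c"
      unfolding good_def using vax ppx cm mf by auto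
    have leq: "\<And>v. v \<le> n \<Longrightarrow> ?l v = ?lx v" using good_lev_eq[OF gcm] by blast
    show "\<forall>j\<in>{1..n}. a j < nu n R T j"
    proof
      fix j assume j1: "j \<in> {1..n}"
      have "a j = x j - m j" using px j1 by (auto simp: psi_def m_def)
      moreover have "x j < after ?lx j + prv ?lx j" using gx j1 by (simp add: good_def)
      moreover have "m j = after ?lx j" using mf j1 by simp
      moreover have "nu n R T j = prv ?lx j" using nuf[OF j1] prv_cong[of ?l ?lx j] leq j1 by simp
      ultimately show "a j < nu n R T j"
      proof -
        assume h1: "a j = x j - m j" and h2: "x j < after ?lx j + prv ?lx j"
          and h3: "m j = after ?lx j" and h4: "nu n R T j = prv ?lx j"
        have "after ?lx j \<le> x j" using gx j1 by (simp add: good_def)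
        hence "x j - after ?lx j < prv ?lx j" using h2 by linarith
        thus ?thesis using h1 h3 h4 by simp
      qed
    qed
  next
    assume alt: "\<forall>j\<in>{1..n}. a j < nu n R T j"
    define x where "x = (\<lambda>u. if u \<in> {1..n} then ?c u + a u else 0)"
    have gx: "good ?l x"
      unfolding good_def
    proof (intro conjI ballI)
      show "valid ?l" by (rule va)
      fix v assume v1: "v \<in> {1..n}"
      have "x v = after ?l v + a v" using v1 cv[OF v1] by (simp add: x_def)
      moreover have "a v < prv ?l v" using alt nuf v1 by auto
      ultimately show "after ?l v \<le> x v" "x v < after ?l v + prv ?l v" by simp_all
    qed
    have xr: "recurrent n R x" by (rule good_recurrent[OF gx]) (simp add: x_def)
    have mx: "minrec n R x = ?c"
    proof -
      have "minrec n R x = (\<lambda>j. if j \<in> {1..n} then after ?l j else 0)"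
        by (rule minrec_form[OF va good_blk[OF gx]])
      also have "\<dots> = ?c" by (rule cform[symmetric])
      finally show ?thesis .
    qed
    have "psi n R x = (T, a)"
    proof -
      have "phi_CT n R (minrec n R x) = T" using mx phi_CT_eq[OF T] by simp
      moreover have "(\<lambda>i. if i \<in> {1..n} then x i - minrec n R x i else 0) = a"
        using mx a0 by (auto simp: x_def)
      ultimately show ?thesis by (simp add: psi_def)
    qed
    thus "(T, a) \<in> Rec_EW n R" using xr by (force simp: Rec_EW_def Rec_def)
  qed
qed

end

theorem theorem4p12:
  fixes n :: nat and R :: "nat set" and T :: tableau and a :: "nat \<Rightarrow> nat"
  assumes "ferrers n R"
    and "(T, a) \<in> DecEWtab n R"
  shows "(T, a) \<in> Rec_EW n R \<longleftrightarrow> (\<forall>j\<in>{1..n}. a j < nu n R T j)"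
proof -
  interpret F: fer n R by (rule fer.intro) (rule assms(1))
  show ?thesis by (rule F.main[OF assms(2)])
qed



end
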